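(* Let $D=D_vD_h$, let $U\in\mathbb{C}^{D\times D}$ be drawn from a unitary $2$-design, and let $H=U^\dagger S U$ for some diagonal matrix $S\in\mathbb{C}^{D\times D}$. If either $\rho=U|0\rangle\langle 0|U^\dagger$ (unitary network) or $\rho=e^{-H}/{\rm Tr}(e^{-H})$ (Boltzmann machine), then for any bounded operator $O_{\rm obj}\in\mathbb{C}^{D_v\times D_v}$ acting on the visible subspace, $$\left|{\rm Tr}\big((O_{\rm obj}\otimes I)(\rho-I/D)\big)\right|\in O\left(\|O_{\rm obj}\|_\infty\sqrt{\frac{D_v}{D_h}}\right)$$ with high probability over $U$.
   Context: The Hilbert space $\mathbb{C}^{D}$ is the tensor product of a visible space of dimension $D_v$ and a hidden space of dimension $D_h$; $O_{\rm obj}\otimes I$ acts as $O_{\rm obj}$ on the visible factor and as the identity on the hidden factor. A unitary $2$-design is a distribution over unitaries whose second moments (expectations of polynomials of degree at most $2$ in the entries of $U$ and at most $2$ in those of $U^\dagger$) agree with those of the Haar measure. $\|\cdot\|_\infty$ is the operator norm. *)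

theory Defs
  imports "HOL-Probability.Probability" "Jordan_Normal_Form.Matrix"
begin

definition adj :: "complex mat \<Rightarrow> complex mat" where
  "adj A = mat (dim_col A) (dim_row A) (\<lambda>(i,j). cnj (A $$ (j,i)))"

definition mtrace :: "complex mat \<Rightarrow> complex" where
  "mtrace A = (\<Sum>i<dim_row A. A $$ (i,i))"

text \<open>Kronecker (tensor) product; the first factor is the visible one.\<close>
definition kron :: "complex mat \<Rightarrow> complex mat \<Rightarrow> complex mat" where
  "kron A B = mat (dim_row A * dim_row B) (dim_col A * dim_col B)
     (\<lambda>(i,j). A $$ (i div dim_row B, j div dim_col B) * B $$ (i mod dim_row B, j mod dim_col B))"

definition outer :: "complex vec \<Rightarrow> complex vec \<Rightarrow> complex mat" where
  "outer v w = mat (dim_vec v) (dim_vec w) (\<lambda>(i,j). v $ i * cnj (w $ j))"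

definition vnorm :: "complex vec \<Rightarrow> real" where
  "vnorm v = sqrt (\<Sum>i<dim_vec v. (cmod (v $ i))\<^sup>2)"

definition opnorm :: "complex mat \<Rightarrow> real" where
  "opnorm A = Sup {vnorm (A *\<^sub>v x) | x. x \<in> carrier_vec (dim_col A) \<and> vnorm x = 1}"

definition mat_exp :: "complex mat \<Rightarrow> complex mat" where
  "mat_exp A = mat (dim_row A) (dim_col A)
     (\<lambda>(i,j). \<Sum>k. ((A ^\<^sub>m k) $$ (i,j)) / of_nat (fact k))"

definition unitary_mat :: "nat \<Rightarrow> complex mat \<Rightarrow> bool" where
  "unitary_mat n U \<longleftrightarrow> U \<in> carrier_mat n n \<and> adj U * U = 1\<^sub>m n"

definition mat_space :: "nat \<Rightarrow> complex mat measure" where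
  "mat_space n = sigma (carrier_mat n n)
     {{A \<in> carrier_mat n n. A $$ (i,j) \<in> B} | i j B. i < n \<and> j < n \<and> B \<in> sets borel}"

definition haar_unitary :: "nat \<Rightarrow> complex mat measure \<Rightarrow> bool" where
  "haar_unitary n H \<longleftrightarrow> prob_space H \<and> sets H = sets (mat_space n) \<and>
     (AE U in H. unitary_mat n U) \<and>
     (\<forall>V. unitary_mat n V \<longrightarrow> distr H (mat_space n) (\<lambda>U. V * U) = H)"

text \<open>Monomial in the entries of U (indices ks) and of conj U, i.e. of U^dagger (indices ls).\<close>
definition monomial :: "(nat \<times> nat) list \<Rightarrow> (nat \<times> nat) list \<Rightarrow> complex mat \<Rightarrow> complex" where
  "monomial ks ls U = (\<Prod>k\<leftarrow>ks. U $$ k) * (\<Prod>l\<leftarrow>ls. cnj (U $$ l))"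

definition unitary_2_design :: "nat \<Rightarrow> complex mat measure \<Rightarrow> bool" where
  "unitary_2_design n \<mu> \<longleftrightarrow> prob_space \<mu> \<and> sets \<mu> = sets (mat_space n) \<and>
     (AE U in \<mu>. unitary_mat n U) \<and>
     (\<exists>H. haar_unitary n H \<and>
        (\<forall>ks ls. length ks \<le> 2 \<and> length ls \<le> 2 \<and> set ks \<union> set ls \<subseteq> {..<n} \<times> {..<n} \<longrightarrow>
           integrable \<mu> (monomial ks ls) \<and>
           (\<integral>U. monomial ks ls U \<partial>\<mu>) = (\<integral>U. monomial ks ls U \<partial>H)))"

definition rho_net :: "nat \<Rightarrow> complex mat \<Rightarrow> complex mat" where
  "rho_net n U = U * outer (unit_vec n 0) (unit_vec n 0) * adj U"

definition rho_boltz :: "complex mat \<Rightarrow> complex mat \<Rightarrow> complex mat" where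
  "rho_boltz S U = (let H = adj U * S * U in (1 / mtrace (mat_exp (- H))) \<cdot>\<^sub>m mat_exp (- H))"

definition deviation :: "complex mat \<Rightarrow> nat \<Rightarrow> complex mat \<Rightarrow> complex" where
  "deviation Obj Dh \<rho> = mtrace (kron Obj (1\<^sub>m Dh) *
      (\<rho> - (1 / of_nat (dim_row Obj * Dh)) \<cdot>\<^sub>m 1\<^sub>m (dim_row Obj * Dh)))"

end

theory Submission
  imports Defs "Jordan_Normal_Form.Determinant"
begin


lemma mult_entry:
  "A \<in> carrier_mat nr m \<Longrightarrow> B \<in> carrier_mat m nc \<Longrightarrow> i < nr \<Longrightarrow> j < nc \<Longrightarrow>
   (A * B) $$ (i,j) = (\<Sum>k<m. A $$ (i,k) * B $$ (k,j))"
  by (auto simp: scalar_prod_def atLeast0LessThan intro!: sum.cong)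

lemma adj_entry[simp]: "i < dim_col A \<Longrightarrow> j < dim_row A \<Longrightarrow> adj A $$ (i,j) = cnj (A $$ (j,i))"
  "dim_row (adj A) = dim_col A" "dim_col (adj A) = dim_row A"
  by (auto simp: adj_def)

lemma adj_carrier[simp]: "A \<in> carrier_mat n m \<Longrightarrow> adj A \<in> carrier_mat m n"
  by (auto simp: adj_def)

lemma unitary_by_entries:
  assumes "V \<in> carrier_mat n n"
    and "\<And>i j. i < n \<Longrightarrow> j < n \<Longrightarrow> (\<Sum>k<n. cnj (V $$ (k,i)) * V $$ (k,j)) = (if i = j then 1 else 0)"
  shows "unitary_mat n V"
  unfolding unitary_mat_def
proof (intro conjI assms(1) eq_matI)
  fix i j assume ij: "i < dim_row (1\<^sub>m n)" "j < dim_col (1\<^sub>m n)"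
  then have "(adj V * V) $$ (i,j) = (\<Sum>k<n. adj V $$ (i,k) * V $$ (k,j))"
    using assms(1) by (intro mult_entry) auto
  also have "\<dots> = (\<Sum>k<n. cnj (V $$ (k,i)) * V $$ (k,j))"
    using assms(1) ij by (intro sum.cong) auto
  finally show "(adj V * V) $$ (i,j) = 1\<^sub>m n $$ (i,j)" using assms(2) ij by auto
qed (use assms in auto)

lemma unitary_entries:
  assumes "unitary_mat n V" "i < n" "j < n"
  shows "(\<Sum>k<n. cnj (V $$ (k,i)) * V $$ (k,j)) = (if i = j then 1 else 0)"
proof -
  have V: "V \<in> carrier_mat n n" and e: "adj V * V = 1\<^sub>m n" using assms unfolding unitary_mat_def by auto
  have "(adj V * V) $$ (i,j) = (\<Sum>k<n. adj V $$ (i,k) * V $$ (k,j))"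
    using V assms by (intro mult_entry) auto
  also have "\<dots> = (\<Sum>k<n. cnj (V $$ (k,i)) * V $$ (k,j))"
    using V assms by (intro sum.cong) auto
  finally show ?thesis using e assms by auto
qed

lemma unitary_entries_row:
  assumes "unitary_mat n V" "i < n" "j < n"
  shows "(\<Sum>k<n. V $$ (i,k) * cnj (V $$ (j,k))) = (if i = j then 1 else 0)"
proof -
  have V: "V \<in> carrier_mat n n" and e: "adj V * V = 1\<^sub>m n" using assms unfolding unitary_mat_def by auto
  have e2: "V * adj V = 1\<^sub>m n" using mat_mult_left_right_inverse[OF adj_carrier[OF V] V e] .
  have "(V * adj V) $$ (i,j) = (\<Sum>k<n. V $$ (i,k) * adj V $$ (k,j))"
    using V assms by (intro mult_entry) auto
  also have "\<dots> = (\<Sum>k<n. V $$ (i,k) * cnj (V $$ (j,k)))"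
    using V assms by (intro sum.cong) auto
  finally show ?thesis using e2 assms by auto
qed


definition phase_mat :: "nat \<Rightarrow> nat \<Rightarrow> complex mat" where
  "phase_mat n p = mat n n (\<lambda>(i,j). if i = j then (if i = p then \<i> else 1) else 0)"

definition perm_mat :: "nat \<Rightarrow> (nat \<Rightarrow> nat) \<Rightarrow> complex mat" where
  "perm_mat n \<pi> = mat n n (\<lambda>(i,j). if j = \<pi> i then 1 else 0)"

definition hr :: complex where "hr = of_real (1 / sqrt 2)"

lemma hr_cnj[simp]: "cnj hr = hr" by (simp add: hr_def)

lemma hr_sq: "hr * hr = 1/2"
proof -
  have "(1 / sqrt 2) * (1 / sqrt 2) = (1/2::real)" by (simp add: divide_simps)
  then have "complex_of_real ((1 / sqrt 2) * (1 / sqrt 2)) = 1/2" by simp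
  then show ?thesis unfolding hr_def by (simp only: of_real_mult)
qed

definition had_mat :: "nat \<Rightarrow> complex mat" where
  "had_mat n = mat n n (\<lambda>(i,j). if i < 2 \<and> j < 2 then (if i = 1 \<and> j = 1 then - hr else hr)
      else (if i = j then 1 else 0))"

definition sw :: "nat \<Rightarrow> nat \<Rightarrow> nat \<Rightarrow> nat" where
  "sw x y z = (if z = x then y else if z = y then x else z)"

lemma sum_delta_left: "x < (n::nat) \<Longrightarrow> (\<Sum>a<n. (if a = x then c else 0) * G a) = (c::complex) * G x"
proof -
  assume "x < n"
  have "(\<Sum>a<n. (if a = x then c else 0) * G a) = (\<Sum>a<n. if a = x then c * G a else 0)"
    by (intro sum.cong) auto
  also have "\<dots> = c * G x" using \<open>x < n\<close> by (simp add: sum.delta)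
  finally show ?thesis .
qed

lemma phase_unitary: "unitary_mat n (phase_mat n p)"
proof (rule unitary_by_entries)
  fix i j assume ij: "i < n" "j < n"
  have "(\<Sum>k<n. cnj (phase_mat n p $$ (k,i)) * phase_mat n p $$ (k,j)) =
        (\<Sum>k<n. (if k = i then cnj (if i = p then \<i> else 1) else 0) * (if k = j then (if j = p then \<i> else 1) else 0))"
    by (intro sum.cong) (auto simp: phase_mat_def ij)
  also have "\<dots> = cnj (if i = p then \<i> else 1) * (if i = j then (if j = p then \<i> else 1) else 0)"
    using ij by (subst sum_delta_left) auto
  also have "\<dots> = (if i = j then 1 else 0)" by auto
  finally show "(\<Sum>k<n. cnj (phase_mat n p $$ (k,i)) * phase_mat n p $$ (k,j)) = (if i = j then 1 else 0)" .
qed (simp add: phase_mat_def)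

lemma sw_lt: "x < n \<Longrightarrow> y < n \<Longrightarrow> z < n \<Longrightarrow> sw x y z < n" by (simp add: sw_def)
lemma sw_sw[simp]: "sw x y (sw x y z) = z" by (simp add: sw_def)
lemma sw_eq_iff: "(sw x y k = a) = (k = sw x y a)" by (auto simp: sw_def)

lemma perm_unitary:
  assumes "x < n" "y < n"
  shows "unitary_mat n (perm_mat n (sw x y))"
proof (rule unitary_by_entries)
  fix i j assume ij: "i < n" "j < n"
  have "(\<Sum>k<n. cnj (perm_mat n (sw x y) $$ (k,i)) * perm_mat n (sw x y) $$ (k,j)) =
        (\<Sum>k<n. (if k = sw x y i then 1 else 0) * (if j = sw x y k then 1 else 0))"
    by (intro sum.cong) (auto simp: perm_mat_def ij sw_eq_iff)
  also have "\<dots> = (if j = sw x y (sw x y i) then 1 else 0)"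
    using ij assms by (subst sum_delta_left) (auto simp: sw_lt)
  also have "\<dots> = (if i = j then 1 else 0)" by auto
  finally show "(\<Sum>k<n. cnj (perm_mat n (sw x y) $$ (k,i)) * perm_mat n (sw x y) $$ (k,j)) = (if i = j then 1 else 0)" .
qed (simp add: perm_mat_def)

lemma sum_lt2: "2 \<le> (n::nat) \<Longrightarrow> (\<Sum>k<n. if k < 2 then f k else 0) = (f 0 + f 1 :: complex)"
proof -
  assume "2 \<le> n"
  have "(\<Sum>k<n. if k < 2 then f k else 0) = (\<Sum>k\<in>{..<n} \<inter> {k. k < 2}. f k)"
    by (simp add: sum.If_cases)
  also have "{..<n} \<inter> {k. k < 2} = {0, 1::nat}" using \<open>2 \<le> n\<close> by auto
  finally show ?thesis by simp
qed

lemma had_unitary: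
  assumes n2: "2 \<le> n"
  shows "unitary_mat n (had_mat n)"
proof (rule unitary_by_entries)
  fix i j assume ij: "i < n" "j < n"
  let ?r = "hr"
  have r2: "?r * ?r = 1/2" by (rule hr_sq)
  show "(\<Sum>k<n. cnj (had_mat n $$ (k,i)) * had_mat n $$ (k,j)) = (if i = j then 1 else 0)"
  proof (cases "i < 2 \<and> j < 2")
    case True
    have "(\<Sum>k<n. cnj (had_mat n $$ (k,i)) * had_mat n $$ (k,j)) =
          (\<Sum>k<n. if k < 2 then cnj (had_mat n $$ (k,i)) * had_mat n $$ (k,j) else 0)"
      using True ij by (intro sum.cong) (auto simp: had_mat_def)
    also have "\<dots> = cnj (had_mat n $$ (0,i)) * had_mat n $$ (0,j) + cnj (had_mat n $$ (1,i)) * had_mat n $$ (1,j)"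
      using n2 by (rule sum_lt2)
    also have "\<dots> = (if i = j then 1 else 0)"
      using True ij n2 r2 by (auto simp: had_mat_def less_2_cases_iff mult.commute)
    finally show ?thesis .
  next
    case False
    have "(\<Sum>k<n. cnj (had_mat n $$ (k,i)) * had_mat n $$ (k,j)) =
          (\<Sum>k<n. (if k = i then 1 else 0) * (if k = j then 1 else 0))"
      using False ij by (intro sum.cong) (auto simp: had_mat_def)
    also have "\<dots> = (if i = j then 1 else 0)"
      using ij by (subst sum_delta_left) auto
    finally show ?thesis .
  qed
qed (simp add: had_mat_def)


definition tinv :: "nat \<Rightarrow> (nat \<Rightarrow> nat \<Rightarrow> nat \<Rightarrow> nat \<Rightarrow> complex) \<Rightarrow> bool" where
  "tinv n T \<longleftrightarrow> (\<forall>V i j k l. unitary_mat n V \<longrightarrow> i < n \<longrightarrow> j < n \<longrightarrow> k < n \<longrightarrow> l < n \<longrightarrow>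
     T i j k l = (\<Sum>a<n. V $$ (i,a) * (\<Sum>b<n. cnj (V $$ (j,b)) * (\<Sum>c<n. cnj (V $$ (k,c)) *
        (\<Sum>d<n. V $$ (l,d) * T a b c d)))))"

definition ph :: "nat \<Rightarrow> nat \<Rightarrow> complex" where "ph p x = (if x = p then \<i> else 1)"

lemma phase_sum: "i < n \<Longrightarrow> (\<Sum>a<n. phase_mat n p $$ (i,a) * G a) = ph p i * G i"
proof -
  assume i: "i < n"
  have "(\<Sum>a<n. phase_mat n p $$ (i,a) * G a) = (\<Sum>a<n. (if a = i then ph p i else 0) * G a)"
    using i by (intro sum.cong) (auto simp: phase_mat_def ph_def)
  then show ?thesis using i by (simp add: sum_delta_left)
qed

lemma phase_sum_cnj: "i < n \<Longrightarrow> (\<Sum>a<n. cnj (phase_mat n p $$ (i,a)) * G a) = cnj (ph p i) * G i"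
proof -
  assume i: "i < n"
  have "(\<Sum>a<n. cnj (phase_mat n p $$ (i,a)) * G a) = (\<Sum>a<n. (if a = i then cnj (ph p i) else 0) * G a)"
    using i by (intro sum.cong) (auto simp: phase_mat_def ph_def)
  then show ?thesis using i by (simp add: sum_delta_left)
qed

lemma perm_sum: "i < n \<Longrightarrow> x < n \<Longrightarrow> y < n \<Longrightarrow> (\<Sum>a<n. perm_mat n (sw x y) $$ (i,a) * G a) = G (sw x y i)"
proof -
  assume i: "i < n" "x < n" "y < n"
  have "(\<Sum>a<n. perm_mat n (sw x y) $$ (i,a) * G a) = (\<Sum>a<n. (if a = sw x y i then 1 else 0) * G a)"
    using i by (intro sum.cong) (auto simp: perm_mat_def)
  then show ?thesis using i by (simp add: sum_delta_left sw_lt)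
qed

lemma perm_sum_cnj: "i < n \<Longrightarrow> x < n \<Longrightarrow> y < n \<Longrightarrow> (\<Sum>a<n. cnj (perm_mat n (sw x y) $$ (i,a)) * G a) = G (sw x y i)"
proof -
  assume i: "i < n" "x < n" "y < n"
  have "(\<Sum>a<n. cnj (perm_mat n (sw x y) $$ (i,a)) * G a) = (\<Sum>a<n. (if a = sw x y i then 1 else 0) * G a)"
    using i by (intro sum.cong) (auto simp: perm_mat_def)
  then show ?thesis using i by (simp add: sum_delta_left sw_lt)
qed

lemma had_sum: "2 \<le> n \<Longrightarrow> (\<Sum>a<n. had_mat n $$ (0,a) * G a) = hr * (G 0 + G 1)"
proof -
  assume n: "2 \<le> n"
  have "(\<Sum>a<n. had_mat n $$ (0,a) * G a) = (\<Sum>a<n. if a < 2 then hr * G a else 0)"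
    using n by (intro sum.cong) (auto simp: had_mat_def)
  also have "\<dots> = hr * G 0 + hr * G 1" using n by (rule sum_lt2)
  finally show ?thesis by (simp only: distrib_left)
qed

lemma had_sum_cnj: "2 \<le> n \<Longrightarrow> (\<Sum>a<n. cnj (had_mat n $$ (0,a)) * G a) = hr * (G 0 + G 1)"
proof -
  assume n: "2 \<le> n"
  have "(\<Sum>a<n. cnj (had_mat n $$ (0,a)) * G a) = (\<Sum>a<n. if a < 2 then hr * G a else 0)"
    using n by (intro sum.cong) (auto simp: had_mat_def)
  also have "\<dots> = hr * G 0 + hr * G 1" using n by (rule sum_lt2)
  finally show ?thesis by (simp only: distrib_left)
qed

lemma r4_lemma:
  fixes r x S :: complex
  assumes "x = r * (r * (r * (r * S)))" "r * r * r * r * 4 = 1"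
  shows "4 * x = S"
proof -
  have "4 * x = (r * r * r * r * 4) * S" using assms(1) by (simp add: ac_simps)
  then show ?thesis using assms(2) by simp
qed

lemma sum4_closed:
  fixes X :: "nat \<Rightarrow> nat \<Rightarrow> complex"
  shows "(\<Sum>a<n. \<Sum>b<n. \<Sum>c<n. \<Sum>d<n. X b a * cnj (X d c) * ((if a = b \<and> c = d then \<beta> else 0) + (if a = c \<and> b = d then \<gamma> else 0)))
     = \<beta> * ((\<Sum>a<n. X a a) * cnj (\<Sum>c<n. X c c)) + \<gamma> * (\<Sum>a<n. \<Sum>b<n. X b a * cnj (X b a))"
proof -
  have 1: "(\<Sum>d<n. X b a * cnj (X d c) * ((if a = b \<and> c = d then \<beta> else 0) + (if a = c \<and> b = d then \<gamma> else 0)))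
     = (if a = b then X b a * cnj (X c c) * \<beta> else 0) + (if a = c then X b a * cnj (X b c) * \<gamma> else 0)"
    if "a < n" "b < n" "c < n" for a b c
    using that by (simp add: distrib_left sum.distrib if_distrib[of "\<lambda>x. _ * x"] sum.delta' cong: if_cong)
  have 2: "(\<Sum>c<n. (if a = b then X b a * cnj (X c c) * \<beta> else 0) + (if a = c then X b a * cnj (X b c) * \<gamma> else 0))
     = (if a = b then X b a * cnj (\<Sum>c<n. X c c) * \<beta> else 0) + X b a * cnj (X b a) * \<gamma>"
    if "a < n" for a b
    using that by (simp add: sum.distrib sum_distrib_left sum_distrib_right sum.delta)
  have 3: "(\<Sum>b<n. (if a = b then X b a * cnj (\<Sum>c<n. X c c) * \<beta> else 0) + X b a * cnj (X b a) * \<gamma>)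
     = X a a * cnj (\<Sum>c<n. X c c) * \<beta> + (\<Sum>b<n. X b a * cnj (X b a)) * \<gamma>"
    if "a < n" for a
    using that by (simp add: sum.distrib sum_distrib_right sum.delta)
  have "(\<Sum>a<n. \<Sum>b<n. \<Sum>c<n. \<Sum>d<n. X b a * cnj (X d c) * ((if a = b \<and> c = d then \<beta> else 0) + (if a = c \<and> b = d then \<gamma> else 0)))
     = (\<Sum>a<n. X a a * cnj (\<Sum>c<n. X c c) * \<beta> + (\<Sum>b<n. X b a * cnj (X b a)) * \<gamma>)"
    by (simp add: 1 2 3)
  also have "\<dots> = \<beta> * ((\<Sum>a<n. X a a) * cnj (\<Sum>c<n. X c c)) + \<gamma> * (\<Sum>a<n. \<Sum>b<n. X b a * cnj (X b a))"
    by (simp add: sum.distrib sum_distrib_left sum_distrib_right ac_simps del: cnj_sum)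
  finally show ?thesis .
qed


lemma four_lemma:
  fixes x :: complex
  assumes h: "4 * x = x + x' + b + b' + c + c'" and e: "x' = x" "b' = b" "c' = c"
  shows "x = b + c"
proof -
  have "2 * (x - (b + c)) = 4 * x - (x + x' + b + b' + c + c')" using e by (simp add: algebra_simps)
  then have "2 * (x - (b + c)) = 0" using h by (simp only: diff_self)
  then show ?thesis by (metis mult_eq_0_iff zero_neq_numeral eq_iff_diff_eq_0)
qed

context
  fixes n :: nat and T :: "nat \<Rightarrow> nat \<Rightarrow> nat \<Rightarrow> nat \<Rightarrow> complex"
  assumes inv: "tinv n T"
begin

lemma tinvD:
  assumes "unitary_mat n V" "i < n" "j < n" "k < n" "l < n"
  shows "T i j k l = (\<Sum>a<n. V $$ (i,a) * (\<Sum>b<n. cnj (V $$ (j,b)) * (\<Sum>c<n. cnj (V $$ (k,c)) *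
        (\<Sum>d<n. V $$ (l,d) * T a b c d))))"
  using inv assms unfolding tinv_def by blast

lemma T_phase:
  assumes "i < n" "j < n" "k < n" "l < n" "p < n"
  shows "T i j k l = ph p i * cnj (ph p j) * cnj (ph p k) * ph p l * T i j k l"
  using tinvD[OF phase_unitary[of n p] assms(1-4)] assms
  by (simp add: phase_sum phase_sum_cnj mult.assoc)

lemma T_zero:
  assumes "i < n" "j < n" "k < n" "l < n" "\<not> ((i = j \<and> k = l) \<or> (i = k \<and> j = l))"
  shows "T i j k l = 0"
proof -
  obtain p where p: "p < n" "ph p i * cnj (ph p j) * cnj (ph p k) * ph p l \<noteq> 1"
  proof (cases "i = j")
    case True
    then show ?thesis using assms by (intro that[of k]) (auto simp: ph_def complex_eq_iff)
  next
    case f1: False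
    show ?thesis
    proof (cases "i = k")
      case True
      then show ?thesis using assms f1 by (intro that[of j]) (auto simp: ph_def complex_eq_iff)
    next
      case False
      then show ?thesis using assms f1 by (intro that[of i]) (auto simp: ph_def complex_eq_iff)
    qed
  qed
  have "T i j k l = (ph p i * cnj (ph p j) * cnj (ph p k) * ph p l) * T i j k l"
    using T_phase[OF assms(1-4) p(1)] by simp
  then show ?thesis using p(2)
    by (metis mult_cancel_right2)
qed

lemma T_perm:
  assumes "i < n" "j < n" "k < n" "l < n" "x < n" "y < n"
  shows "T i j k l = T (sw x y i) (sw x y j) (sw x y k) (sw x y l)"
  using tinvD[OF perm_unitary[of x n y] assms(1-4)] assms
  by (simp add: perm_sum perm_sum_cnj sw_lt)

lemma T_had:
  assumes "2 \<le> n"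
  shows "4 * T 0 0 0 0 = T 0 0 0 0 + T 1 1 1 1 + T 0 0 1 1 + T 1 1 0 0 + T 0 1 0 1 + T 1 0 1 0"
proof -
  let ?r = "hr"
  have r4: "?r * ?r * ?r * ?r * 4 = 1"
  proof -
    have "?r * ?r * ?r * ?r * 4 = (hr * hr) * (hr * hr) * 4" by (simp only: mult.assoc)
    then show ?thesis by (simp add: hr_sq)
  qed
  have n: "0 < n" "1 < n" using assms by auto
  have "T 0 0 0 0 = ?r * (?r * (?r * (?r * (T 0 0 0 0 + T 1 1 1 1 + T 0 0 1 1 + T 1 1 0 0 + T 0 1 0 1 + T 1 0 1 0))))"
    apply (subst tinvD[OF had_unitary[OF assms] n(1) n(1) n(1) n(1)])
    apply (simp only: had_sum[OF assms] had_sum_cnj[OF assms])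
    using n by (simp add: T_zero algebra_simps)
  then show ?thesis using r4 by (rule r4_lemma)
qed

lemma T_diag: "a < n \<Longrightarrow> T a a a a = T 0 0 0 0"
  using T_perm[of 0 0 0 0 0 a] by (simp add: sw_def)

lemma T_P2:
  assumes "a < n" "c < n" "a \<noteq> c"
  shows "T a a c c = T 0 0 1 1"
proof -
  define d where "d = sw 0 a c"
  have d: "d < n" "d \<noteq> 0" using assms by (auto simp: d_def sw_def)
  have n1: "1 < n" using assms by auto
  have "T 0 0 1 1 = T 0 0 d d" using T_perm[of 0 0 1 1 1 d] d n1 by (simp add: sw_def)
  also have "\<dots> = T a a c c" using T_perm[of 0 0 d d 0 a] d assms by (simp add: sw_def d_def)
  finally show ?thesis by simp
qed

lemma T_P3:
  assumes "a < n" "c < n" "a \<noteq> c"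
  shows "T a c a c = T 0 1 0 1"
proof -
  define d where "d = sw 0 a c"
  have d: "d < n" "d \<noteq> 0" using assms by (auto simp: d_def sw_def)
  have n1: "1 < n" using assms by auto
  have "T 0 1 0 1 = T 0 d 0 d" using T_perm[of 0 1 0 1 1 d] d n1 by (simp add: sw_def)
  also have "\<dots> = T a c a c" using T_perm[of 0 d 0 d 0 a] d assms by (simp add: sw_def d_def)
  finally show ?thesis by simp
qed

lemma T_closed:
  assumes n2: "2 \<le> n" and abcd: "a < n" "b < n" "c < n" "d < n"
  shows "T a b c d = (if a = b \<and> c = d then T 0 0 1 1 else 0) + (if a = c \<and> b = d then T 0 1 0 1 else 0)"
proof -
  have H: "T 0 0 0 0 = T 0 0 1 1 + T 0 1 0 1"
  proof -
    have n1: "0 < n" "1 < n" using n2 by auto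
    have e1: "T 1 1 1 1 = T 0 0 0 0" using T_diag[of 1] n1 by simp
    have e2: "T 1 1 0 0 = T 0 0 1 1" using T_P2[of 1 0] n1 by simp
    have e3: "T 1 0 1 0 = T 0 1 0 1" using T_P3[of 1 0] n1 by simp
    show ?thesis using T_had[OF n2] e1 e2 e3 by (rule four_lemma)
  qed
  show ?thesis
  proof (cases "a = b \<and> c = d")
    case True
    show ?thesis
    proof (cases "a = c")
      case True
      then have "T a b c d = T 0 0 0 0" using \<open>a = b \<and> c = d\<close> T_diag[OF abcd(1)] by simp
      then show ?thesis using H True \<open>a = b \<and> c = d\<close> by simp
    next
      case False
      then have "T a b c d = T 0 0 1 1" using \<open>a = b \<and> c = d\<close> T_P2[OF abcd(1) abcd(3)] by simp
      then show ?thesis using False \<open>a = b \<and> c = d\<close> by simp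
    qed
  next
    case F: False
    show ?thesis
    proof (cases "a = c \<and> b = d")
      case True
      then have ab: "a \<noteq> b" using F by auto
      have "T a b c d = T 0 1 0 1" using True T_P3[OF abcd(1) abcd(2) ab] by simp
      then show ?thesis using F True by simp
    next
      case False
      then have "T a b c d = 0" using F by (intro T_zero abcd) blast
      then show ?thesis by (subst if_not_P[OF F], subst if_not_P[OF False]) simp
    qed
  qed
qed

lemma T_final:
  fixes X :: "nat \<Rightarrow> nat \<Rightarrow> complex" and F :: real
  assumes n2: "2 \<le> n" and tr: "(\<Sum>a<n. T a a 0 0) = 0"
    and fro: "(\<Sum>a<n. \<Sum>b<n. T a b a b) = of_real F"
  shows "(\<Sum>a<n. \<Sum>b<n. \<Sum>c<n. \<Sum>d<n. X b a * cnj (X d c) * T a b c d) =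
     of_real (F / (real n ^ 2 - 1) * (\<Sum>a<n. \<Sum>b<n. (cmod (X b a))\<^sup>2)
              - F / (real n * (real n ^ 2 - 1)) * (cmod (\<Sum>a<n. X a a))\<^sup>2)"
proof -
  define \<beta> where "\<beta> = T 0 0 1 1"
  define \<gamma> where "\<gamma> = T 0 1 0 1"
  have cl: "T a b c d = (if a = b \<and> c = d then \<beta> else 0) + (if a = c \<and> b = d then \<gamma> else 0)"
    if "a < n" "b < n" "c < n" "d < n" for a b c d
    using T_closed[OF n2 that] by (simp add: \<beta>_def \<gamma>_def)
  have n0: "0 < n" using n2 by auto
  have "(\<Sum>a<n. T a a 0 0) = (\<Sum>a<n. \<beta> + (if a = 0 then \<gamma> else 0))"
    using n0 by (intro sum.cong) (auto simp: cl)
  also have "\<dots> = of_nat n * \<beta> + \<gamma>" using n0 by (simp add: sum.distrib)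
  finally have e1: "of_nat n * \<beta> + \<gamma> = 0" using tr by simp
  have "(\<Sum>a<n. \<Sum>b<n. T a b a b) = (\<Sum>a<n. \<Sum>b<n. (if a = b then \<beta> else 0) + \<gamma>)"
    by (intro sum.cong) (auto simp: cl)
  also have "\<dots> = of_nat n * \<beta> + of_nat n * of_nat n * \<gamma>" by (simp add: sum.distrib algebra_simps)
  finally have e2: "of_nat n * \<beta> + of_nat n * of_nat n * \<gamma> = of_real F" using fro by simp
  have nn: "(of_nat n :: complex) * of_nat n - 1 \<noteq> 0"
  proof -
    have "(2::real) \<le> real n" using n2 by simp
    then have "4 \<le> real n * real n" using mult_mono[of 2 "real n" 2 "real n"] by simp
    then have "real n * real n - 1 \<noteq> 0" by simp
    moreover have "complex_of_real (real n * real n - 1) = (of_nat n * of_nat n - 1)" by simp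
    ultimately show ?thesis by (metis of_real_eq_0_iff)
  qed
  have g: "\<gamma> = of_real (F / (real n ^ 2 - 1))"
  proof -
    have "\<gamma> * (of_nat n * of_nat n - 1) = (of_nat n * \<beta> + of_nat n * of_nat n * \<gamma>) - (of_nat n * \<beta> + \<gamma>)"
      by (simp add: algebra_simps)
    also have "\<dots> = of_real F" using e1 e2 by simp
    finally have "\<gamma> * (of_nat n * of_nat n - 1) = of_real F" .
    then have "\<gamma> = of_real F / (of_nat n * of_nat n - 1)" using nn by (simp add: field_simps)
    then show ?thesis by (simp add: power2_eq_square)
  qed
  have "of_nat n * \<beta> = - \<gamma>" using e1 by (simp add: eq_neg_iff_add_eq_0)
  then have b: "\<beta> = - \<gamma> / of_nat n" using n0 by (simp add: field_simps)
  have "(\<Sum>a<n. \<Sum>b<n. \<Sum>c<n. \<Sum>d<n. X b a * cnj (X d c) * T a b c d) =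
     (\<Sum>a<n. \<Sum>b<n. \<Sum>c<n. \<Sum>d<n. X b a * cnj (X d c) * ((if a = b \<and> c = d then \<beta> else 0) + (if a = c \<and> b = d then \<gamma> else 0)))"
    by (intro sum.cong) (auto simp: cl)
  also have "\<dots> = \<beta> * ((\<Sum>a<n. X a a) * cnj (\<Sum>c<n. X c c)) + \<gamma> * (\<Sum>a<n. \<Sum>b<n. X b a * cnj (X b a))"
    by (rule sum4_closed)
  also have "(\<Sum>a<n. X a a) * cnj (\<Sum>c<n. X c c) = of_real ((cmod (\<Sum>a<n. X a a))\<^sup>2)"
    by (simp add: complex_norm_square[symmetric] del: cnj_sum)
  also have "(\<Sum>a<n. \<Sum>b<n. X b a * cnj (X b a)) = of_real (\<Sum>a<n. \<Sum>b<n. (cmod (X b a))\<^sup>2)"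
    by (simp add: complex_norm_square[symmetric])
  also have "\<beta> * of_real ((cmod (\<Sum>a<n. X a a))\<^sup>2) + \<gamma> * of_real (\<Sum>a<n. \<Sum>b<n. (cmod (X b a))\<^sup>2)
     = of_real (- (F / (real n ^ 2 - 1)) / real n * (cmod (\<Sum>a<n. X a a))\<^sup>2
                + F / (real n ^ 2 - 1) * (\<Sum>a<n. \<Sum>b<n. (cmod (X b a))\<^sup>2))"
    unfolding b g by simp
  also have "- (F / (real n ^ 2 - 1)) / real n * (cmod (\<Sum>a<n. X a a))\<^sup>2
                + F / (real n ^ 2 - 1) * (\<Sum>a<n. \<Sum>b<n. (cmod (X b a))\<^sup>2) =
       F / (real n ^ 2 - 1) * (\<Sum>a<n. \<Sum>b<n. (cmod (X b a))\<^sup>2)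
              - F / (real n * (real n ^ 2 - 1)) * (cmod (\<Sum>a<n. X a a))\<^sup>2"
    by (simp add: divide_simps)
  finally show ?thesis .
qed

end


lemma borel_measurable_cnj'[measurable (raw)]:
  "f \<in> borel_measurable M \<Longrightarrow> (\<lambda>x. cnj (f x)) \<in> borel_measurable M"
  by (rule borel_measurable_continuous_on[OF linear_continuous_on[OF bounded_linear_cnj]])

lemma mat_gen_pow: "{{A \<in> carrier_mat n n. A $$ (i,j) \<in> B} | i j B. i < n \<and> j < n \<and> B \<in> sets borel} \<subseteq> Pow (carrier_mat n n)"
  by auto

lemma space_mat_space[simp]: "space (mat_space n) = carrier_mat n n"
  unfolding mat_space_def by (rule space_measure_of[OF mat_gen_pow])

lemma sets_mat_space: "sets (mat_space n) = sigma_sets (carrier_mat n n)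
     {{A \<in> carrier_mat n n. A $$ (i,j) \<in> B} | i j B. i < n \<and> j < n \<and> B \<in> sets borel}"
  unfolding mat_space_def by (rule sets_measure_of[OF mat_gen_pow])

lemma entry_meas:
  assumes "i < n" "j < n"
  shows "(\<lambda>U. U $$ (i,j)) \<in> borel_measurable (mat_space n)"
proof (rule measurableI)
  fix B :: "complex set" assume "B \<in> sets borel"
  then have "{A \<in> carrier_mat n n. A $$ (i,j) \<in> B} \<in> sets (mat_space n)"
    unfolding sets_mat_space using assms by (intro sigma_sets.Basic) blast
  moreover have "(\<lambda>U. U $$ (i,j)) -` B \<inter> space (mat_space n) = {A \<in> carrier_mat n n. A $$ (i,j) \<in> B}"
    by auto
  ultimately show "(\<lambda>U. U $$ (i,j)) -` B \<inter> space (mat_space n) \<in> sets (mat_space n)" by simp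
qed simp

lemma mult_meas:
  assumes V: "V \<in> carrier_mat n n"
  shows "(\<lambda>U. V * U) \<in> measurable (mat_space n) (mat_space n)"
proof -
  let ?G = "{{A \<in> carrier_mat n n. A $$ (i,j) \<in> (B::complex set)} | i j B. i < n \<and> j < n \<and> B \<in> sets borel}"
  have "(\<lambda>U. V * U) \<in> measurable (mat_space n) (sigma (carrier_mat n n) ?G)"
  proof (rule measurable_measure_of[OF mat_gen_pow])
    show "(*) V \<in> space (mat_space n) \<rightarrow> carrier_mat n n" using V by auto
  next
    fix Y :: "complex mat set" assume "Y \<in> ?G"
    then obtain i j B where Y: "Y = {A \<in> carrier_mat n n. A $$ (i,j) \<in> B}" "i < n" "j < n" "B \<in> sets borel"
      by blast
    have m: "(\<lambda>U. \<Sum>k<n. V $$ (i,k) * U $$ (k,j)) \<in> borel_measurable (mat_space n)"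
      using Y(3) by (intro borel_measurable_sum borel_measurable_times borel_measurable_const entry_meas) auto
    have "(*) V -` Y \<inter> space (mat_space n) = (\<lambda>U. \<Sum>k<n. V $$ (i,k) * U $$ (k,j)) -` B \<inter> space (mat_space n)"
      using Y V by (auto simp: mult_entry[OF V])
    also have "\<dots> \<in> sets (mat_space n)" using measurable_sets[OF m Y(4)] .
    finally show "(*) V -` Y \<inter> space (mat_space n) \<in> sets (mat_space n)" .
  qed
  then show ?thesis by (simp add: mat_space_def)
qed


definition Mf :: "nat \<Rightarrow> (nat \<Rightarrow> nat \<Rightarrow> complex) \<Rightarrow> complex mat \<Rightarrow> nat \<Rightarrow> nat \<Rightarrow> complex" where
  "Mf n Y U a b = (\<Sum>p<n. \<Sum>q<n. U $$ (a,p) * Y p q * cnj (U $$ (b,q)))"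

definition TT :: "nat \<Rightarrow> (nat \<Rightarrow> nat \<Rightarrow> complex) \<Rightarrow> complex mat measure \<Rightarrow> nat \<Rightarrow> nat \<Rightarrow> nat \<Rightarrow> nat \<Rightarrow> complex" where
  "TT n Y H a b c d = (\<integral>U. Mf n Y U a b * cnj (Mf n Y U c d) \<partial>H)"

lemma Mf_meas: "a < n \<Longrightarrow> b < n \<Longrightarrow> (\<lambda>U. Mf n Y U a b) \<in> borel_measurable (mat_space n)"
  unfolding Mf_def
  by (intro borel_measurable_sum borel_measurable_times borel_measurable_const borel_measurable_cnj' entry_meas) auto

lemma MM_meas: "a < n \<Longrightarrow> b < n \<Longrightarrow> c < n \<Longrightarrow> d < n \<Longrightarrow>
   (\<lambda>U. Mf n Y U a b * cnj (Mf n Y U c d)) \<in> borel_measurable (mat_space n)"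
  by (intro borel_measurable_times borel_measurable_cnj' Mf_meas)

lemma unitary_entry_bound:
  assumes "unitary_mat n U" "i < n" "j < n"
  shows "cmod (U $$ (i,j)) \<le> 1"
proof -
  have "(\<Sum>k<n. cnj (U $$ (k,j)) * U $$ (k,j)) = 1" using unitary_entries[OF assms(1) assms(3) assms(3)] by simp
  moreover have "(\<Sum>k<n. complex_of_real ((cmod (U $$ (k,j)))\<^sup>2)) = (\<Sum>k<n. cnj (U $$ (k,j)) * U $$ (k,j))"
    by (intro sum.cong refl) (simp only: complex_norm_square mult.commute)
  ultimately have "(\<Sum>k<n. complex_of_real ((cmod (U $$ (k,j)))\<^sup>2)) = 1" by simp
  then have s: "(\<Sum>k<n. (cmod (U $$ (k,j)))\<^sup>2) = 1"
    by (metis of_real_eq_1_iff of_real_sum)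
  have "(cmod (U $$ (i,j)))\<^sup>2 \<le> (\<Sum>k<n. (cmod (U $$ (k,j)))\<^sup>2)"
    using assms(2) by (intro member_le_sum) auto
  then have "(cmod (U $$ (i,j)))\<^sup>2 \<le> 1" using s by simp
  then show ?thesis by (simp add: power_le_one_iff abs_le_square_iff)
qed

lemma Mf_bound:
  assumes "unitary_mat n U" "a < n" "b < n"
  shows "cmod (Mf n Y U a b) \<le> (\<Sum>p<n. \<Sum>q<n. cmod (Y p q))"
proof -
  have "cmod (Mf n Y U a b) \<le> (\<Sum>p<n. cmod (\<Sum>q<n. U $$ (a,p) * Y p q * cnj (U $$ (b,q))))"
    unfolding Mf_def by (rule norm_sum)
  also have "\<dots> \<le> (\<Sum>p<n. \<Sum>q<n. cmod (U $$ (a,p) * Y p q * cnj (U $$ (b,q))))"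
    by (intro sum_mono norm_sum)
  also have "\<dots> \<le> (\<Sum>p<n. \<Sum>q<n. cmod (Y p q))"
  proof (intro sum_mono)
    fix p q assume "p \<in> {..<n}" "q \<in> {..<n}"
    then have "cmod (U $$ (a,p)) \<le> 1" "cmod (U $$ (b,q)) \<le> 1"
      using assms unitary_entry_bound by auto
    then have "cmod (U $$ (a,p)) * cmod (U $$ (b,q)) \<le> 1" by (intro mult_le_one) auto
    then have "(cmod (U $$ (a,p)) * cmod (U $$ (b,q))) * cmod (Y p q) \<le> cmod (Y p q)"
      by (intro mult_left_le_one_le) auto
    then show "cmod (U $$ (a,p) * Y p q * cnj (U $$ (b,q))) \<le> cmod (Y p q)"
      by (simp add: norm_mult ac_simps)
  qed
  finally show ?thesis .
qed


declare index_mult_mat(1)[simp del]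

lemma adj_mult:
  assumes A: "A \<in> carrier_mat n m" and B: "B \<in> carrier_mat m k"
  shows "adj (A * B) = adj B * adj A"
proof (rule eq_matI)
  fix i j assume ij: "i < dim_row (adj B * adj A)" "j < dim_col (adj B * adj A)"
  then have i: "i < k" and j: "j < n" using A B by auto
  have "adj (A * B) $$ (i,j) = cnj ((A * B) $$ (j,i))" using A B i j by simp
  also have "\<dots> = cnj (\<Sum>l<m. A $$ (j,l) * B $$ (l,i))" by (simp only: mult_entry[OF A B j i])
  also have "\<dots> = (\<Sum>l<m. adj B $$ (i,l) * adj A $$ (l,j))"
    using A B i j by (auto intro!: sum.cong simp: mult.commute)
  also have "\<dots> = (adj B * adj A) $$ (i,j)"
    using A B i j by (simp add: mult_entry[of "adj B" k m "adj A" n])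
  finally show "adj (A * B) $$ (i,j) = (adj B * adj A) $$ (i,j)" .
qed (use A B in auto)

lemma mtrace_comm:
  assumes A: "A \<in> carrier_mat n m" and B: "B \<in> carrier_mat m n"
  shows "mtrace (A * B) = mtrace (B * A)"
proof -
  have "mtrace (A * B) = (\<Sum>i<n. \<Sum>l<m. A $$ (i,l) * B $$ (l,i))"
    unfolding mtrace_def using A B by (auto intro!: sum.cong simp: mult_entry[OF A B, of _ _])
  also have "\<dots> = (\<Sum>l<m. \<Sum>i<n. B $$ (l,i) * A $$ (i,l))"
    by (subst sum.swap) (simp add: mult.commute)
  also have "\<dots> = mtrace (B * A)"
    unfolding mtrace_def using A B by (auto intro!: sum.cong simp: mult_entry[OF B A])
  finally show ?thesis .
qed

lemma adj_adj: "adj (adj A) = A"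
  by (rule eq_matI) (auto simp: adj_def)

definition Ym :: "nat \<Rightarrow> (nat \<Rightarrow> nat \<Rightarrow> complex) \<Rightarrow> complex mat" where
  "Ym n Y = mat n n (\<lambda>(p,q). Y p q)"

lemma Ym_carrier[simp]: "Ym n Y \<in> carrier_mat n n" by (simp add: Ym_def)
lemma Ym_dims[simp]: "dim_row (Ym n Y) = n" "dim_col (Ym n Y) = n" by (auto simp: Ym_def)
lemma Ym_index[simp]: "p < n \<Longrightarrow> q < n \<Longrightarrow> Ym n Y $$ (p,q) = Y p q" by (simp add: Ym_def)

lemma assoc_n: "A \<in> carrier_mat n n \<Longrightarrow> B \<in> carrier_mat n n \<Longrightarrow> C \<in> carrier_mat n n \<Longrightarrow> A * B * C = A * (B * C)"
  by (rule assoc_mult_mat)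
lemma cl_n: "A \<in> carrier_mat n n \<Longrightarrow> B \<in> carrier_mat n n \<Longrightarrow> A * B \<in> carrier_mat n n"
  by (rule mult_carrier_mat)
lemma adjc_n: "A \<in> carrier_mat n n \<Longrightarrow> adj A \<in> carrier_mat n n"
  by (rule adj_carrier)

lemma Mf_mat:
  assumes U: "U \<in> carrier_mat n n" and ab: "a < n" "b < n"
  shows "Mf n Y U a b = (U * Ym n Y * adj U) $$ (a,b)"
proof -
  have "(U * Ym n Y * adj U) $$ (a,b) = (\<Sum>q<n. (U * Ym n Y) $$ (a,q) * adj U $$ (q,b))"
    using U ab by (intro mult_entry) auto
  also have "\<dots> = (\<Sum>q<n. (\<Sum>p<n. U $$ (a,p) * Y p q) * cnj (U $$ (b,q)))"
    using U ab by (intro sum.cong refl) (auto simp: mult_entry[OF U Ym_carrier] intro!: sum.cong)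
  also have "\<dots> = (\<Sum>q<n. \<Sum>p<n. U $$ (a,p) * Y p q * cnj (U $$ (b,q)))"
    by (simp add: sum_distrib_right)
  also have "\<dots> = Mf n Y U a b" unfolding Mf_def by (rule sum.swap)
  finally show ?thesis by simp
qed

lemma Mf_mult:
  assumes U: "U \<in> carrier_mat n n" and V: "V \<in> carrier_mat n n" and ab: "a < n" "b < n"
  shows "Mf n Y (V * U) a b = (\<Sum>s<n. V $$ (a,s) * (\<Sum>t<n. cnj (V $$ (b,t)) * Mf n Y U s t))"
proof -
  let ?M = "U * Ym n Y * adj U"
  have M: "?M \<in> carrier_mat n n" using U by auto
  have "Mf n Y (V * U) a b = (V * U * Ym n Y * adj (V * U)) $$ (a,b)"
    using U V ab by (intro Mf_mat) auto
  also have "V * U * Ym n Y * adj (V * U) = V * ?M * adj V"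
    using U V by (simp add: adj_mult[OF V U] assoc_n[where n=n] cl_n[where n=n] adjc_n[where n=n])
  also have "(V * ?M * adj V) $$ (a,b) = (\<Sum>t<n. (V * ?M) $$ (a,t) * adj V $$ (t,b))"
    using V M ab by (intro mult_entry) auto
  also have "\<dots> = (\<Sum>t<n. (\<Sum>s<n. V $$ (a,s) * Mf n Y U s t) * cnj (V $$ (b,t)))"
    using U V ab by (intro sum.cong refl) (auto simp: mult_entry[OF V M] Mf_mat[OF U] intro!: sum.cong)
  also have "\<dots> = (\<Sum>t<n. \<Sum>s<n. V $$ (a,s) * Mf n Y U s t * cnj (V $$ (b,t)))"
    by (simp add: sum_distrib_right)
  also have "\<dots> = (\<Sum>s<n. \<Sum>t<n. V $$ (a,s) * Mf n Y U s t * cnj (V $$ (b,t)))"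
    by (rule sum.swap)
  also have "\<dots> = (\<Sum>s<n. V $$ (a,s) * (\<Sum>t<n. cnj (V $$ (b,t)) * Mf n Y U s t))"
    by (intro sum.cong refl) (simp add: sum_distrib_left ac_simps)
  finally show ?thesis .
qed

lemma unitary_carrier: "unitary_mat n U \<Longrightarrow> U \<in> carrier_mat n n" by (simp add: unitary_mat_def)
lemma unitary_left: "unitary_mat n U \<Longrightarrow> adj U * U = 1\<^sub>m n" by (simp add: unitary_mat_def)

lemma Mf_trace:
  assumes U: "unitary_mat n U" and tr: "(\<Sum>p<n. Y p p) = 0"
  shows "(\<Sum>a<n. Mf n Y U a a) = 0"
proof -
  have Uc: "U \<in> carrier_mat n n" using U by (rule unitary_carrier)
  have YU: "Ym n Y * adj U \<in> carrier_mat n n" using Uc by (meson mult_carrier_mat adj_carrier Ym_carrier)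
  have e0: "(\<Sum>a<n. Mf n Y U a a) = mtrace (U * Ym n Y * adj U)"
    unfolding mtrace_def using Uc by (auto intro!: sum.cong simp: Mf_mat[OF Uc])
  have "mtrace (U * Ym n Y * adj U) = mtrace (U * (Ym n Y * adj U))" using Uc by (subst assoc_mult_mat[of _ n n _ n _ n]) auto
  also have "\<dots> = mtrace ((Ym n Y * adj U) * U)" using Uc YU by (intro mtrace_comm) auto
  also have "\<dots> = mtrace (Ym n Y * (adj U * U))" using Uc by (subst assoc_mult_mat[of _ n n _ n _ n]) auto
  also have "\<dots> = mtrace (Ym n Y)" using unitary_left[OF U] by (simp add: right_mult_one_mat[OF Ym_carrier])
  also have "\<dots> = 0" using tr unfolding mtrace_def Ym_def by simp
  finally show ?thesis using e0 by simp
qed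

lemma Mf_fro:
  assumes U: "unitary_mat n U"
  shows "(\<Sum>a<n. \<Sum>b<n. Mf n Y U a b * cnj (Mf n Y U a b)) = (\<Sum>p<n. \<Sum>q<n. Y p q * cnj (Y p q))"
proof -
  have Uc: "U \<in> carrier_mat n n" using U by (rule unitary_carrier)
  let ?Y = "Ym n Y"
  let ?M = "U * ?Y * adj U"
  have M: "?M \<in> carrier_mat n n" using Uc by auto
  have "(\<Sum>a<n. \<Sum>b<n. Mf n Y U a b * cnj (Mf n Y U a b)) = mtrace (?M * adj ?M)"
    unfolding mtrace_def using Uc M
    by (auto intro!: sum.cong simp: Mf_mat[OF Uc] mult_entry[OF M adj_carrier[OF M]])
  also have "adj ?M = U * adj ?Y * adj U"
    using Uc by (simp add: adj_mult[where n=n and m=n and k=n] adj_adj assoc_n[where n=n] cl_n[where n=n] adjc_n[where n=n])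
  also have "?M * (U * adj ?Y * adj U) = U * (?Y * adj ?Y * adj U)"
    using Uc unitary_left[OF U] by (simp add: assoc_n[where n=n] cl_n[where n=n] adjc_n[where n=n]
        left_mult_one_mat[where nr=n and nc=n] assoc_n[of "adj U" n U, symmetric])
  also have "mtrace (U * (?Y * adj ?Y * adj U)) = mtrace ((?Y * adj ?Y * adj U) * U)"
    using Uc by (intro mtrace_comm) (auto intro!: cl_n adjc_n)
  also have "(?Y * adj ?Y * adj U) * U = ?Y * adj ?Y"
    using Uc unitary_left[OF U] by (simp add: assoc_n[where n=n] cl_n[where n=n] adjc_n[where n=n]
        right_mult_one_mat[where nr=n and nc=n])
  also have "mtrace (?Y * adj ?Y) = (\<Sum>p<n. \<Sum>q<n. Y p q * cnj (Y p q))"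
    unfolding mtrace_def
    by (auto intro!: sum.cong simp: mult_entry[OF Ym_carrier adj_carrier[OF Ym_carrier]])
  finally show ?thesis .
qed


lemma int_sum_mult:
  fixes g :: "'i \<Rightarrow> 'a \<Rightarrow> complex"
  assumes "\<And>a. a \<in> A \<Longrightarrow> integrable M (g a)"
  shows "(\<integral>x. (\<Sum>a\<in>A. c a * g a x) \<partial>M) = (\<Sum>a\<in>A. c a * (\<integral>x. g a x \<partial>M))"
proof -
  have "(\<integral>x. (\<Sum>a\<in>A. c a * g a x) \<partial>M) = (\<Sum>a\<in>A. \<integral>x. c a * g a x \<partial>M)"
    by (rule Bochner_Integration.integral_sum) (use assms in auto)
  then show ?thesis by simp
qed

lemma integrable_sum_mult:
  fixes g :: "'i \<Rightarrow> 'a \<Rightarrow> complex"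
  assumes "\<And>a. a \<in> A \<Longrightarrow> integrable M (g a)"
  shows "integrable M (\<lambda>x. \<Sum>a\<in>A. c a * g a x)"
  using assms by auto

lemma prod_nested:
  fixes x y z w :: "nat \<Rightarrow> complex" and M N :: "nat \<Rightarrow> nat \<Rightarrow> complex"
  shows "(\<Sum>a<n. x a * (\<Sum>b<n. y b * M a b)) * (\<Sum>c<n. z c * (\<Sum>d<n. w d * N c d)) =
    (\<Sum>a<n. x a * (\<Sum>b<n. y b * (\<Sum>c<n. z c * (\<Sum>d<n. w d * (M a b * N c d)))))"
proof -
  let ?R = "(\<Sum>c<n. z c * (\<Sum>d<n. w d * N c d))"
  have 1: "M a b * ?R = (\<Sum>c<n. z c * (\<Sum>d<n. w d * (M a b * N c d)))" for a b
    by (simp add: sum_distrib_left mult.left_commute)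
  have "(\<Sum>a<n. x a * (\<Sum>b<n. y b * M a b)) * ?R = (\<Sum>a<n. x a * (\<Sum>b<n. y b * (M a b * ?R)))"
    by (simp add: sum_distrib_right mult.assoc)
  also have "\<dots> = (\<Sum>a<n. x a * (\<Sum>b<n. y b * (\<Sum>c<n. z c * (\<Sum>d<n. w d * (M a b * N c d)))))"
    by (simp only: 1)
  finally show ?thesis .
qed

lemma prod_sum2:
  fixes A B :: "nat \<Rightarrow> nat \<Rightarrow> complex"
  shows "(\<Sum>a<n. \<Sum>b<n. A a b) * (\<Sum>c<n. \<Sum>d<n. B c d) = (\<Sum>a<n. \<Sum>b<n. \<Sum>c<n. \<Sum>d<n. A a b * B c d)"
proof -
  have 1: "A a b * (\<Sum>c<n. \<Sum>d<n. B c d) = (\<Sum>c<n. \<Sum>d<n. A a b * B c d)" for a b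
    by (simp only: sum_distrib_left)
  have "(\<Sum>a<n. \<Sum>b<n. A a b) * (\<Sum>c<n. \<Sum>d<n. B c d) = (\<Sum>a<n. \<Sum>b<n. A a b * (\<Sum>c<n. \<Sum>d<n. B c d))"
    by (simp only: sum_distrib_right)
  also have "\<dots> = (\<Sum>a<n. \<Sum>b<n. \<Sum>c<n. \<Sum>d<n. A a b * B c d)" by (simp only: 1)
  finally show ?thesis .
qed

context
  fixes n :: nat and H :: "complex mat measure" and Y :: "nat \<Rightarrow> nat \<Rightarrow> complex"
  assumes haar: "haar_unitary n H"
begin

lemma H_prob: "prob_space H" using haar by (simp add: haar_unitary_def)
lemma H_sets: "sets H = sets (mat_space n)" using haar by (simp add: haar_unitary_def)
lemma H_space: "space H = carrier_mat n n"
  using sets_eq_imp_space_eq[OF H_sets] by simp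
lemma H_AE: "AE U in H. unitary_mat n U" using haar by (simp add: haar_unitary_def)
lemma H_inv: "unitary_mat n V \<Longrightarrow> distr H (mat_space n) (\<lambda>U. V * U) = H"
  using haar by (simp add: haar_unitary_def)

lemma meas_H: "f \<in> borel_measurable (mat_space n) \<Longrightarrow> f \<in> borel_measurable H"
  by (subst measurable_cong_sets[OF H_sets refl])

lemma int_MM:
  assumes "a < n" "b < n" "c < n" "d < n"
  shows "integrable H (\<lambda>U. Mf n Y U a b * cnj (Mf n Y U c d))"
proof -
  interpret prob_space H by (rule H_prob)
  let ?B = "(\<Sum>p<n. \<Sum>q<n. cmod (Y p q)) * (\<Sum>p<n. \<Sum>q<n. cmod (Y p q))"
  show ?thesis
  proof (rule integrable_const_bound[where B = ?B])
    show "AE U in H. norm (Mf n Y U a b * cnj (Mf n Y U c d)) \<le> ?B"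
      using H_AE
    proof eventually_elim
      case (elim U)
      have "norm (Mf n Y U a b * cnj (Mf n Y U c d)) = cmod (Mf n Y U a b) * cmod (Mf n Y U c d)"
        by (simp add: norm_mult)
      also have "\<dots> \<le> ?B"
        using Mf_bound[OF elim, of a b Y] Mf_bound[OF elim, of c d Y] assms
        by (intro mult_mono) (auto intro: order_trans[OF norm_ge_zero])
      finally show ?case .
    qed
    show "(\<lambda>U. Mf n Y U a b * cnj (Mf n Y U c d)) \<in> borel_measurable H"
      using assms by (intro meas_H MM_meas)
  qed
qed

lemma integral_inv:
  fixes f :: "complex mat \<Rightarrow> complex"
  assumes V: "unitary_mat n V" and f: "f \<in> borel_measurable (mat_space n)"
  shows "(\<integral>U. f (V * U) \<partial>H) = (\<integral>U. f U \<partial>H)"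
proof -
  have g: "(\<lambda>U. V * U) \<in> measurable H (mat_space n)"
    using mult_meas[OF unitary_carrier[OF V]] by (subst measurable_cong_sets[OF H_sets refl])
  have "integral\<^sup>L (distr H (mat_space n) (\<lambda>U. V * U)) f = (\<integral>U. f (V * U) \<partial>H)"
    by (rule integral_distr[OF g f])
  then show ?thesis using H_inv[OF V] by simp
qed

lemma TT_tinv: "tinv n (TT n Y H)"
  unfolding tinv_def
proof (intro allI impI)
  fix V i j k l assume V: "unitary_mat n V" and ijkl: "i < n" "j < n" "k < n" "l < n"
  have Vc: "V \<in> carrier_mat n n" using V by (rule unitary_carrier)
  have "TT n Y H i j k l = (\<integral>U. Mf n Y (V * U) i j * cnj (Mf n Y (V * U) k l) \<partial>H)"
    unfolding TT_def using integral_inv[OF V MM_meas[OF ijkl, of Y]] by simp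
  also have "\<dots> = (\<integral>U. (\<Sum>a<n. V $$ (i,a) * (\<Sum>b<n. cnj (V $$ (j,b)) * (\<Sum>c<n. cnj (V $$ (k,c)) *
        (\<Sum>d<n. V $$ (l,d) * (Mf n Y U a b * cnj (Mf n Y U c d)))))) \<partial>H)"
  proof (intro Bochner_Integration.integral_cong refl)
    fix U assume "U \<in> space H"
    then have Uc: "U \<in> carrier_mat n n" by (simp add: H_space)
    have "Mf n Y (V * U) i j * cnj (Mf n Y (V * U) k l) =
      (\<Sum>a<n. V $$ (i,a) * (\<Sum>b<n. cnj (V $$ (j,b)) * Mf n Y U a b)) *
      (\<Sum>c<n. cnj (V $$ (k,c)) * (\<Sum>d<n. V $$ (l,d) * cnj (Mf n Y U c d)))"
      using ijkl by (simp add: Mf_mult[OF Uc Vc])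
    also have "\<dots> = (\<Sum>a<n. V $$ (i,a) * (\<Sum>b<n. cnj (V $$ (j,b)) * (\<Sum>c<n. cnj (V $$ (k,c)) *
        (\<Sum>d<n. V $$ (l,d) * (Mf n Y U a b * cnj (Mf n Y U c d))))))"
      by (rule prod_nested)
    finally show "Mf n Y (V * U) i j * cnj (Mf n Y (V * U) k l) = \<dots>" .
  qed
  also have "\<dots> = (\<Sum>a<n. V $$ (i,a) * (\<Sum>b<n. cnj (V $$ (j,b)) * (\<Sum>c<n. cnj (V $$ (k,c)) *
        (\<Sum>d<n. V $$ (l,d) * TT n Y H a b c d))))"
  proof -
    let ?MM = "\<lambda>a b c d U. Mf n Y U a b * cnj (Mf n Y U c d)"
    have J4: "integrable H (\<lambda>U. \<Sum>d<n. V $$ (l,d) * ?MM a b c d U)" if "a < n" "b < n" "c < n" for a b c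
      using that by (intro integrable_sum_mult int_MM) auto
    have I4: "(\<integral>U. (\<Sum>d<n. V $$ (l,d) * ?MM a b c d U) \<partial>H) = (\<Sum>d<n. V $$ (l,d) * TT n Y H a b c d)"
      if "a < n" "b < n" "c < n" for a b c
      unfolding TT_def using that by (intro int_sum_mult int_MM) auto
    have J3: "integrable H (\<lambda>U. \<Sum>c<n. cnj (V $$ (k,c)) * (\<Sum>d<n. V $$ (l,d) * ?MM a b c d U))" if "a < n" "b < n" for a b
      using that by (intro integrable_sum_mult J4) auto
    have I3: "(\<integral>U. (\<Sum>c<n. cnj (V $$ (k,c)) * (\<Sum>d<n. V $$ (l,d) * ?MM a b c d U)) \<partial>H) =
       (\<Sum>c<n. cnj (V $$ (k,c)) * (\<Sum>d<n. V $$ (l,d) * TT n Y H a b c d))" if "a < n" "b < n" for a b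
      using that by (subst int_sum_mult) (auto intro!: J4 sum.cong simp: I4)
    have J2: "integrable H (\<lambda>U. \<Sum>b<n. cnj (V $$ (j,b)) * (\<Sum>c<n. cnj (V $$ (k,c)) * (\<Sum>d<n. V $$ (l,d) * ?MM a b c d U)))" if "a < n" for a
      using that by (intro integrable_sum_mult J3) auto
    have I2: "(\<integral>U. (\<Sum>b<n. cnj (V $$ (j,b)) * (\<Sum>c<n. cnj (V $$ (k,c)) * (\<Sum>d<n. V $$ (l,d) * ?MM a b c d U))) \<partial>H) =
       (\<Sum>b<n. cnj (V $$ (j,b)) * (\<Sum>c<n. cnj (V $$ (k,c)) * (\<Sum>d<n. V $$ (l,d) * TT n Y H a b c d)))" if "a < n" for a
      using that by (subst int_sum_mult) (auto intro!: J3 sum.cong simp: I3)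
    show ?thesis
      by (subst int_sum_mult) (auto intro!: J2 sum.cong simp: I2)
  qed
  finally show "TT n Y H i j k l = \<dots>" .
qed


lemma int_sum_lt:
  fixes g :: "nat \<Rightarrow> complex mat \<Rightarrow> complex"
  assumes "\<And>a. a < m \<Longrightarrow> integrable H (g a)"
  shows "(\<integral>x. (\<Sum>a<m. g a x) \<partial>H) = (\<Sum>a<m. \<integral>x. g a x \<partial>H)"
  by (rule Bochner_Integration.integral_sum) (use assms in auto)

lemma int_sum4:
  fixes f :: "nat \<Rightarrow> nat \<Rightarrow> nat \<Rightarrow> nat \<Rightarrow> complex mat \<Rightarrow> complex"
  assumes "\<And>a b c d. a < n \<Longrightarrow> b < n \<Longrightarrow> c < n \<Longrightarrow> d < n \<Longrightarrow> integrable H (f a b c d)"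
  shows "(\<integral>U. (\<Sum>a<n. \<Sum>b<n. \<Sum>c<n. \<Sum>d<n. f a b c d U) \<partial>H) = (\<Sum>a<n. \<Sum>b<n. \<Sum>c<n. \<Sum>d<n. \<integral>U. f a b c d U \<partial>H)"
proof -
  have i3: "integrable H (\<lambda>U. \<Sum>d<n. f a b c d U)" if "a < n" "b < n" "c < n" for a b c
    using that assms by (intro Bochner_Integration.integrable_sum) auto
  have i2: "integrable H (\<lambda>U. \<Sum>c<n. \<Sum>d<n. f a b c d U)" if "a < n" "b < n" for a b
    using that i3 assms by (intro Bochner_Integration.integrable_sum) auto
  have i1: "integrable H (\<lambda>U. \<Sum>b<n. \<Sum>c<n. \<Sum>d<n. f a b c d U)" if "a < n" for a
    using that i2 assms by (intro Bochner_Integration.integrable_sum) auto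
  have s3: "(\<integral>U. (\<Sum>d<n. f a b c d U) \<partial>H) = (\<Sum>d<n. \<integral>U. f a b c d U \<partial>H)" if "a < n" "b < n" "c < n" for a b c
    using that by (intro int_sum_lt assms)
  have s2: "(\<integral>U. (\<Sum>c<n. \<Sum>d<n. f a b c d U) \<partial>H) = (\<Sum>c<n. \<Sum>d<n. \<integral>U. f a b c d U \<partial>H)" if "a < n" "b < n" for a b
    using that by (subst int_sum_lt) (auto intro!: i3 sum.cong simp: s3)
  have s1: "(\<integral>U. (\<Sum>b<n. \<Sum>c<n. \<Sum>d<n. f a b c d U) \<partial>H) = (\<Sum>b<n. \<Sum>c<n. \<Sum>d<n. \<integral>U. f a b c d U \<partial>H)" if "a < n" for a
    using that by (subst int_sum_lt) (auto intro!: i2 sum.cong simp: s2)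
  show ?thesis by (subst int_sum_lt) (auto intro!: i1 sum.cong simp: s1)
qed

lemma TT_trace:
  assumes tr: "(\<Sum>p<n. Y p p) = 0" and n0: "0 < n"
  shows "(\<Sum>a<n. TT n Y H a a 0 0) = 0"
proof -
  have "(\<Sum>a<n. TT n Y H a a 0 0) = (\<integral>U. (\<Sum>a<n. Mf n Y U a a * cnj (Mf n Y U 0 0)) \<partial>H)"
    unfolding TT_def by (rule Bochner_Integration.integral_sum[symmetric]) (use n0 in \<open>auto intro: int_MM\<close>)
  also have "\<dots> = (\<integral>U. 0 \<partial>H)"
  proof (rule integral_cong_AE)
    show "(\<lambda>U. \<Sum>a<n. Mf n Y U a a * cnj (Mf n Y U 0 0)) \<in> borel_measurable H"
      using n0 by (intro meas_H borel_measurable_sum MM_meas) auto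
    show "AE U in H. (\<Sum>a<n. Mf n Y U a a * cnj (Mf n Y U 0 0)) = 0"
      using H_AE
    proof eventually_elim
      case (elim U)
      have "(\<Sum>a<n. Mf n Y U a a * cnj (Mf n Y U 0 0)) = (\<Sum>a<n. Mf n Y U a a) * cnj (Mf n Y U 0 0)"
        by (simp add: sum_distrib_right)
      then show ?case using Mf_trace[where U=U and Y=Y and n=n, OF elim tr] by simp
    qed
  qed simp
  finally show ?thesis by simp
qed

lemma TT_fro:
  "(\<Sum>a<n. \<Sum>b<n. TT n Y H a b a b) = of_real (\<Sum>p<n. \<Sum>q<n. (cmod (Y p q))\<^sup>2)"
proof -
  interpret prob_space H by (rule H_prob)
  let ?F = "(\<Sum>p<n. \<Sum>q<n. (cmod (Y p q))\<^sup>2)"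
  have "(\<Sum>a<n. \<Sum>b<n. TT n Y H a b a b) = (\<integral>U. (\<Sum>a<n. \<Sum>b<n. Mf n Y U a b * cnj (Mf n Y U a b)) \<partial>H)"
    unfolding TT_def
  proof -
    have i1: "integrable H (\<lambda>U. \<Sum>b<n. Mf n Y U a b * cnj (Mf n Y U a b))" if "a < n" for a
      using that by (intro Bochner_Integration.integrable_sum int_MM) auto
    show "(\<Sum>a<n. \<Sum>b<n. \<integral>U. Mf n Y U a b * cnj (Mf n Y U a b) \<partial>H) =
      (\<integral>U. (\<Sum>a<n. \<Sum>b<n. Mf n Y U a b * cnj (Mf n Y U a b)) \<partial>H)"
      using i1 by (simp add: int_sum_lt int_MM)
  qed
  also have "\<dots> = (\<integral>U. of_real ?F \<partial>H)"
  proof (rule integral_cong_AE)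
    show "(\<lambda>U. \<Sum>a<n. \<Sum>b<n. Mf n Y U a b * cnj (Mf n Y U a b)) \<in> borel_measurable H"
      by (intro meas_H borel_measurable_sum MM_meas) auto
    show "AE U in H. (\<Sum>a<n. \<Sum>b<n. Mf n Y U a b * cnj (Mf n Y U a b)) = of_real ?F"
      using H_AE
    proof eventually_elim
      case (elim U)
      have yy: "Y p q * cnj (Y p q) = of_real ((cmod (Y p q))\<^sup>2)" for p q
        by (rule complex_norm_square[symmetric])
      have "(\<Sum>p<n. \<Sum>q<n. Y p q * cnj (Y p q)) = of_real ?F"
        by (simp only: yy of_real_sum)
      then show ?case using Mf_fro[OF elim] by simp
    qed
  qed simp
  also have "\<dots> = of_real ?F" by (simp add: prob_space)
  finally show ?thesis .
qed

lemma H_bound: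
  fixes X :: "nat \<Rightarrow> nat \<Rightarrow> complex"
  assumes n2: "2 \<le> n" and tr: "(\<Sum>p<n. Y p p) = 0"
  shows "(\<integral>U. (\<Sum>a<n. \<Sum>b<n. X b a * Mf n Y U a b) * cnj (\<Sum>a<n. \<Sum>b<n. X b a * Mf n Y U a b) \<partial>H) =
     of_real ((\<Sum>p<n. \<Sum>q<n. (cmod (Y p q))\<^sup>2) / (real n ^ 2 - 1) * (\<Sum>a<n. \<Sum>b<n. (cmod (X b a))\<^sup>2)
              - (\<Sum>p<n. \<Sum>q<n. (cmod (Y p q))\<^sup>2) / (real n * (real n ^ 2 - 1)) * (cmod (\<Sum>a<n. X a a))\<^sup>2)"
proof -
  have pw: "(\<Sum>a<n. \<Sum>b<n. X b a * Mf n Y U a b) * cnj (\<Sum>a<n. \<Sum>b<n. X b a * Mf n Y U a b) =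
     (\<Sum>a<n. \<Sum>b<n. \<Sum>c<n. \<Sum>d<n. X b a * cnj (X d c) * (Mf n Y U a b * cnj (Mf n Y U c d)))" for U
  proof -
    have c: "cnj (\<Sum>a<n. \<Sum>b<n. X b a * Mf n Y U a b) = (\<Sum>c<n. \<Sum>d<n. cnj (X d c) * cnj (Mf n Y U c d))"
      by simp
    have "(\<Sum>a<n. \<Sum>b<n. X b a * Mf n Y U a b) * cnj (\<Sum>a<n. \<Sum>b<n. X b a * Mf n Y U a b) =
       (\<Sum>a<n. \<Sum>b<n. X b a * Mf n Y U a b) * (\<Sum>c<n. \<Sum>d<n. cnj (X d c) * cnj (Mf n Y U c d))"
      by (simp only: c)
    also have "\<dots> = (\<Sum>a<n. \<Sum>b<n. \<Sum>c<n. \<Sum>d<n. (X b a * Mf n Y U a b) * (cnj (X d c) * cnj (Mf n Y U c d)))"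
      by (rule prod_sum2)
    also have "\<dots> = (\<Sum>a<n. \<Sum>b<n. \<Sum>c<n. \<Sum>d<n. X b a * cnj (X d c) * (Mf n Y U a b * cnj (Mf n Y U c d)))"
      by (simp only: mult_ac)
    finally show ?thesis .
  qed
  have "(\<integral>U. (\<Sum>a<n. \<Sum>b<n. X b a * Mf n Y U a b) * cnj (\<Sum>a<n. \<Sum>b<n. X b a * Mf n Y U a b) \<partial>H) =
     (\<integral>U. (\<Sum>a<n. \<Sum>b<n. \<Sum>c<n. \<Sum>d<n. X b a * cnj (X d c) * (Mf n Y U a b * cnj (Mf n Y U c d))) \<partial>H)"
    by (simp only: pw)
  also have "\<dots> = (\<Sum>a<n. \<Sum>b<n. \<Sum>c<n. \<Sum>d<n. X b a * cnj (X d c) * TT n Y H a b c d)"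
    by (subst int_sum4) (auto simp: TT_def int_MM)
  also have "\<dots> = of_real ((\<Sum>p<n. \<Sum>q<n. (cmod (Y p q))\<^sup>2) / (real n ^ 2 - 1) * (\<Sum>a<n. \<Sum>b<n. (cmod (X b a))\<^sup>2)
              - (\<Sum>p<n. \<Sum>q<n. (cmod (Y p q))\<^sup>2) / (real n * (real n ^ 2 - 1)) * (cmod (\<Sum>a<n. X a a))\<^sup>2)"
    using n2 by (intro T_final[OF TT_tinv n2 TT_trace[OF tr] TT_fro]) auto
  finally show ?thesis .
qed

end


lemma sum_divmod:
  fixes f :: "nat \<Rightarrow> 'a::comm_monoid_add"
  shows "(\<Sum>a<m*k. f a) = (\<Sum>i<m. \<Sum>h<k. f (i*k + h))"
proof (induction m)
  case 0
  then show ?case by simp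
next
  case (Suc m)
  have "(\<Sum>a<Suc m * k. f a) = (\<Sum>a\<in>{0..<m*k}. f a) + (\<Sum>a\<in>{m*k..<m*k+k}. f a)"
    by (subst sum.atLeastLessThan_concat) (auto simp: atLeast0LessThan add.commute)
  also have "(\<Sum>a\<in>{m*k..<m*k+k}. f a) = (\<Sum>h\<in>{0..<k}. f (h + m*k))"
    using sum.shift_bounds_nat_ivl[of f 0 "m*k" k] by (simp add: add.commute)
  finally show ?case using Suc by (simp add: atLeast0LessThan add.commute)
qed

lemma vnorm_ge_entry:
  assumes "j < dim_vec x"
  shows "cmod (x $ j) \<le> vnorm x"
proof -
  have "(cmod (x $ j))\<^sup>2 \<le> (\<Sum>i<dim_vec x. (cmod (x $ i))\<^sup>2)"
    using assms by (intro member_le_sum) auto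
  then show ?thesis unfolding vnorm_def by (simp add: real_le_rsqrt)
qed

lemma opnorm_bdd:
  fixes A :: "complex mat"
  shows "bdd_above {vnorm (A *\<^sub>v x) | x. x \<in> carrier_vec (dim_col A) \<and> vnorm x = 1}"
proof -
  let ?B = "sqrt (\<Sum>i<dim_row A. (\<Sum>j<dim_col A. cmod (A $$ (i,j)))\<^sup>2)"
  show ?thesis
  proof (rule bdd_aboveI[where M = ?B])
    fix y assume "y \<in> {vnorm (A *\<^sub>v x) | x. x \<in> carrier_vec (dim_col A) \<and> vnorm x = 1}"
    then obtain x where x: "x \<in> carrier_vec (dim_col A)" "vnorm x = 1" "y = vnorm (A *\<^sub>v x)" by blast
    have xe: "cmod (x $ j) \<le> 1" if "j < dim_col A" for j
      using vnorm_ge_entry[of j x] x that by auto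
    have e: "cmod ((A *\<^sub>v x) $ i) \<le> (\<Sum>j<dim_col A. cmod (A $$ (i,j)))" if "i < dim_row A" for i
    proof -
      have "(A *\<^sub>v x) $ i = (\<Sum>j<dim_col A. A $$ (i,j) * x $ j)"
        using that x by (auto simp: scalar_prod_def atLeast0LessThan intro!: sum.cong)
      also have "cmod \<dots> \<le> (\<Sum>j<dim_col A. cmod (A $$ (i,j) * x $ j))" by (rule norm_sum)
      also have "\<dots> \<le> (\<Sum>j<dim_col A. cmod (A $$ (i,j)))"
        using xe by (intro sum_mono) (auto simp: norm_mult intro: mult_left_le_one_le[OF _ norm_ge_zero] mult_left_le)
      finally show ?thesis .
    qed
    have "(\<Sum>i<dim_row A. (cmod ((A *\<^sub>v x) $ i))\<^sup>2) \<le> (\<Sum>i<dim_row A. (\<Sum>j<dim_col A. cmod (A $$ (i,j)))\<^sup>2)"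
      using e by (intro sum_mono power_mono) auto
    then show "y \<le> ?B" using x unfolding vnorm_def by simp
  qed
qed

lemma col_bound:
  fixes A :: "complex mat"
  assumes A: "A \<in> carrier_mat m m" and j: "j < m"
  shows "(\<Sum>i<m. (cmod (A $$ (i,j)))\<^sup>2) \<le> (opnorm A)\<^sup>2"
proof -
  have ej: "vnorm (unit_vec m j) = 1"
  proof -
    have "(\<Sum>i<m. (cmod (unit_vec m j $ i))\<^sup>2) = (\<Sum>i<m. if i = j then 1 else 0)"
      using j by (intro sum.cong) auto
    then show ?thesis unfolding vnorm_def using j by simp
  qed
  have Ae: "(A *\<^sub>v unit_vec m j) $ i = A $$ (i,j)" if "i < m" for i
  proof -
    have "(A *\<^sub>v unit_vec m j) $ i = (\<Sum>k<m. A $$ (i,k) * (if k = j then 1 else 0))"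
      using that A j by (auto simp: scalar_prod_def atLeast0LessThan intro!: sum.cong)
    also have "\<dots> = (\<Sum>k<m. (if k = j then 1 else 0) * A $$ (i,k))" by (simp add: mult.commute)
    also have "\<dots> = A $$ (i,j)" using j by (simp add: sum_delta_left)
    finally show ?thesis .
  qed
  have "vnorm (A *\<^sub>v unit_vec m j) = sqrt (\<Sum>i<m. (cmod (A $$ (i,j)))\<^sup>2)"
    unfolding vnorm_def using A Ae by (auto intro!: sum.cong arg_cong[where f = sqrt])
  moreover have "vnorm (A *\<^sub>v unit_vec m j) \<le> opnorm A"
    unfolding opnorm_def using A ej by (intro cSup_upper opnorm_bdd) auto
  ultimately have "sqrt (\<Sum>i<m. (cmod (A $$ (i,j)))\<^sup>2) \<le> opnorm A" by simp
  then show ?thesis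
    by (metis (no_types, lifting) power2_le_iff_abs_le real_sqrt_abs real_sqrt_le_iff abs_of_nonneg
        real_sqrt_ge_zero sum_nonneg zero_le_power2 order_trans real_sqrt_pow2)
qed


lemma kron_entry:
  assumes O: "Obj \<in> carrier_mat Dv Dv" and "i < Dv * Dh" "j < Dv * Dh"
  shows "kron Obj (1\<^sub>m Dh) $$ (i,j) = Obj $$ (i div Dh, j div Dh) * (if i mod Dh = j mod Dh then 1 else 0)"
proof -
  have Dh: "0 < Dh" using assms by (cases Dh) auto
  show ?thesis using assms Dh unfolding kron_def by simp
qed

lemma kron_dims: "Obj \<in> carrier_mat Dv Dv \<Longrightarrow> kron Obj (1\<^sub>m Dh) \<in> carrier_mat (Dv*Dh) (Dv*Dh)"
  unfolding kron_def by auto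

lemma kron_fro:
  assumes O: "Obj \<in> carrier_mat Dv Dv" and Dh: "0 < Dh"
  shows "(\<Sum>a<Dv*Dh. \<Sum>b<Dv*Dh. (cmod (kron Obj (1\<^sub>m Dh) $$ (b,a)))\<^sup>2) \<le> real (Dv*Dh) * (opnorm Obj)\<^sup>2"
proof -
  have col: "(\<Sum>b<Dv*Dh. (cmod (kron Obj (1\<^sub>m Dh) $$ (b,a)))\<^sup>2) \<le> (opnorm Obj)\<^sup>2" if a: "a < Dv*Dh" for a
  proof -
    have ad: "a div Dh < Dv" using a Dh by (simp add: less_mult_imp_div_less mult.commute)
    have am: "a mod Dh < Dh" using Dh by simp
    have "(\<Sum>b<Dv*Dh. (cmod (kron Obj (1\<^sub>m Dh) $$ (b,a)))\<^sup>2) =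
          (\<Sum>i<Dv. \<Sum>h<Dh. (cmod (kron Obj (1\<^sub>m Dh) $$ (i*Dh+h,a)))\<^sup>2)"
      by (rule sum_divmod)
    also have "\<dots> = (\<Sum>i<Dv. \<Sum>h<Dh. (if h = a mod Dh then (cmod (Obj $$ (i, a div Dh)))\<^sup>2 else 0))"
    proof (intro sum.cong refl)
      fix i h assume ih: "i \<in> {..<Dv}" "h \<in> {..<Dh}"
      then have lt: "i*Dh + h < Dv*Dh"
        by (metis lessThan_iff add.commute add_less_cancel_left le_less_trans mult.commute mult_Suc_right
            mult_le_mono1 Suc_leI less_le_trans nat_add_left_cancel_less)
      have dm: "(i*Dh+h) div Dh = i" "(i*Dh+h) mod Dh = h" using ih Dh by auto
      show "(cmod (kron Obj (1\<^sub>m Dh) $$ (i*Dh+h,a)))\<^sup>2 = (if h = a mod Dh then (cmod (Obj $$ (i, a div Dh)))\<^sup>2 else 0)"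
        using kron_entry[OF O lt a] dm by simp
    qed
    also have "\<dots> = (\<Sum>i<Dv. (cmod (Obj $$ (i, a div Dh)))\<^sup>2)"
      using am by (simp add: sum.delta')
    also have "\<dots> \<le> (opnorm Obj)\<^sup>2" by (rule col_bound[OF O ad])
    finally show ?thesis .
  qed
  have "(\<Sum>a<Dv*Dh. \<Sum>b<Dv*Dh. (cmod (kron Obj (1\<^sub>m Dh) $$ (b,a)))\<^sup>2) \<le> (\<Sum>a<Dv*Dh. (opnorm Obj)\<^sup>2)"
    using col by (intro sum_mono) auto
  then show ?thesis by simp
qed

lemma dev_sum:
  assumes O: "Obj \<in> carrier_mat Dv Dv"
  shows "deviation Obj Dh R = (\<Sum>a<Dv*Dh. \<Sum>b<Dv*Dh. kron Obj (1\<^sub>m Dh) $$ (b,a) *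
            (R $$ (a,b) - (if a = b then 1 / of_nat (Dv*Dh) else 0)))"
proof -
  let ?n = "Dv*Dh"
  let ?K = "kron Obj (1\<^sub>m Dh)"
  let ?M = "R - (1 / of_nat ?n) \<cdot>\<^sub>m 1\<^sub>m ?n"
  have K: "?K \<in> carrier_mat ?n ?n" using kron_dims[OF O] .
  have M: "?M \<in> carrier_mat ?n ?n" by auto
  have "deviation Obj Dh R = (\<Sum>b<?n. (?K * ?M) $$ (b,b))"
    unfolding deviation_def mtrace_def using K O by (simp add: carrier_matD)
  also have "\<dots> = (\<Sum>b<?n. \<Sum>a<?n. ?K $$ (b,a) * ?M $$ (a,b))"
    by (intro sum.cong refl mult_entry[OF K M]) auto
  also have "\<dots> = (\<Sum>b<?n. \<Sum>a<?n. ?K $$ (b,a) * (R $$ (a,b) - (if a = b then 1 / of_nat ?n else 0)))"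
    by (intro sum.cong refl) auto
  also have "\<dots> = (\<Sum>a<?n. \<Sum>b<?n. ?K $$ (b,a) * (R $$ (a,b) - (if a = b then 1 / of_nat ?n else 0)))"
    by (rule sum.swap)
  finally show ?thesis .
qed


definition Qf :: "nat \<Rightarrow> (nat \<Rightarrow> nat \<Rightarrow> complex) \<Rightarrow> (nat \<Rightarrow> nat \<Rightarrow> complex) \<Rightarrow> complex mat \<Rightarrow> complex" where
  "Qf n X Y U = (\<Sum>a<n. \<Sum>b<n. X b a * Mf n Y U a b)"

lemma prod_sum4:
  fixes A B :: "nat \<Rightarrow> nat \<Rightarrow> nat \<Rightarrow> nat \<Rightarrow> complex"
  shows "(\<Sum>a<n. \<Sum>b<n. \<Sum>p<n. \<Sum>q<n. A a b p q) * (\<Sum>a<n. \<Sum>b<n. \<Sum>p<n. \<Sum>q<n. B a b p q) =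
    (\<Sum>a<n. \<Sum>b<n. \<Sum>p<n. \<Sum>q<n. \<Sum>a'<n. \<Sum>b'<n. \<Sum>p'<n. \<Sum>q'<n. A a b p q * B a' b' p' q')"
proof -
  let ?S = "(\<Sum>a<n. \<Sum>b<n. \<Sum>p<n. \<Sum>q<n. B a b p q)"
  have 1: "A a b p q * ?S = (\<Sum>a'<n. \<Sum>b'<n. \<Sum>p'<n. \<Sum>q'<n. A a b p q * B a' b' p' q')" for a b p q
    by (simp only: sum_distrib_left)
  have "(\<Sum>a<n. \<Sum>b<n. \<Sum>p<n. \<Sum>q<n. A a b p q) * ?S = (\<Sum>a<n. \<Sum>b<n. \<Sum>p<n. \<Sum>q<n. A a b p q * ?S)"
    by (simp only: sum_distrib_right)
  also have "\<dots> = (\<Sum>a<n. \<Sum>b<n. \<Sum>p<n. \<Sum>q<n. \<Sum>a'<n. \<Sum>b'<n. \<Sum>p'<n. \<Sum>q'<n. A a b p q * B a' b' p' q')"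
    by (simp only: 1)
  finally show ?thesis .
qed

lemma Qf_expand:
  "Qf n X Y U = (\<Sum>a<n. \<Sum>b<n. \<Sum>p<n. \<Sum>q<n. X b a * Y p q * (U $$ (a,p) * cnj (U $$ (b,q))))"
  unfolding Qf_def Mf_def by (simp add: sum_distrib_left mult_ac)

lemma Qf_poly:
  "Qf n X Y U * cnj (Qf n X Y U) =
   (\<Sum>a<n. \<Sum>b<n. \<Sum>p<n. \<Sum>q<n. \<Sum>a'<n. \<Sum>b'<n. \<Sum>p'<n. \<Sum>q'<n.
      (X b a * Y p q * cnj (X b' a') * cnj (Y p' q')) * monomial [(a,p),(b',q')] [(b,q),(a',p')] U)"
proof -
  have c: "cnj (Qf n X Y U) = (\<Sum>a<n. \<Sum>b<n. \<Sum>p<n. \<Sum>q<n. cnj (X b a) * cnj (Y p q) * (cnj (U $$ (a,p)) * U $$ (b,q)))"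
    unfolding Qf_expand by simp
  show ?thesis
    unfolding c
    apply (subst Qf_expand)
    apply (subst prod_sum4)
    apply (simp only: monomial_def)
    apply (simp add: mult_ac)
    done
qed

context
  fixes n :: nat and \<mu> H :: "complex mat measure"
  assumes haar: "haar_unitary n H"
    and mom: "\<forall>ks ls. length ks \<le> 2 \<and> length ls \<le> 2 \<and> set ks \<union> set ls \<subseteq> {..<n} \<times> {..<n} \<longrightarrow>
           integrable \<mu> (monomial ks ls) \<and> (\<integral>U. monomial ks ls U \<partial>\<mu>) = (\<integral>U. monomial ks ls U \<partial>H)"
begin

definition PP :: "(complex mat \<Rightarrow> complex) \<Rightarrow> bool" where
  "PP f \<longleftrightarrow> integrable \<mu> f \<and> integrable H f \<and> (\<integral>U. f U \<partial>\<mu>) = (\<integral>U. f U \<partial>H)"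

lemma PP_sum: "(\<And>i. i \<in> I \<Longrightarrow> PP (f i)) \<Longrightarrow> PP (\<lambda>U. \<Sum>i\<in>I. f i U)"
  unfolding PP_def
  by (auto simp: Bochner_Integration.integral_sum intro!: Bochner_Integration.integrable_sum sum.cong)

lemma PP_mult: "PP f \<Longrightarrow> PP (\<lambda>U. c * f U)"
  unfolding PP_def by auto

lemma PP_mono:
  assumes "a < n" "p < n" "b < n" "q < n" "a' < n" "p' < n" "b' < n" "q' < n"
  shows "PP (monomial [(a,p),(b',q')] [(b,q),(a',p')])"
proof -
  have m: "integrable \<mu> (monomial [(a,p),(b',q')] [(b,q),(a',p')]) \<and>
      (\<integral>U. monomial [(a,p),(b',q')] [(b,q),(a',p')] U \<partial>\<mu>) = (\<integral>U. monomial [(a,p),(b',q')] [(b,q),(a',p')] U \<partial>H)"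
    using mom assms by auto
  interpret prob_space H by (rule H_prob[OF haar])
  have "integrable H (monomial [(a,p),(b',q')] [(b,q),(a',p')])"
  proof (rule integrable_const_bound[where B = 1])
    show "AE U in H. norm (monomial [(a,p),(b',q')] [(b,q),(a',p')] U) \<le> 1"
      using H_AE[OF haar]
    proof eventually_elim
      case (elim U)
      have b: "cmod (U $$ (i,j)) \<le> 1" if "i < n" "j < n" for i j
        using unitary_entry_bound[OF elim that] .
      have "norm (monomial [(a,p),(b',q')] [(b,q),(a',p')] U) =
         cmod (U $$ (a,p)) * cmod (U $$ (b',q')) * (cmod (U $$ (b,q)) * cmod (U $$ (a',p')))"
        by (simp add: monomial_def norm_mult)
      also have "\<dots> \<le> 1 * 1 * (1 * 1)"
        using assms b by (intro mult_mono) auto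
      finally show ?case by simp
    qed
    show "monomial [(a,p),(b',q')] [(b,q),(a',p')] \<in> borel_measurable H"
      unfolding monomial_def using assms
      by (intro meas_H[OF haar]) (auto intro!: borel_measurable_times borel_measurable_cnj' entry_meas)
  qed
  then show ?thesis using m unfolding PP_def by auto
qed

lemma PP_Q:
  fixes X Y :: "nat \<Rightarrow> nat \<Rightarrow> complex"
  shows "PP (\<lambda>U. Qf n X Y U * cnj (Qf n X Y U))"
  unfolding Qf_poly
  by (intro PP_sum PP_mult PP_mono) auto

end


declare index_mult_mat(1)[simp del]

definition Ynet :: "nat \<Rightarrow> nat \<Rightarrow> nat \<Rightarrow> complex" where
  "Ynet n p q = (if p = 0 \<and> q = 0 then 1 else 0) - (if p = q then 1 / of_nat n else 0)"

lemma sum_delta_right: "x < (n::nat) \<Longrightarrow> (\<Sum>a<n. G a * (if a = x then c else 0)) = G x * (c::complex)"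
  using sum_delta_left[of x n c G] by (simp add: mult.commute)

lemma net_entry:
  assumes U: "unitary_mat n U" and ab: "a < n" "b < n"
  shows "rho_net n U $$ (a,b) - (if a = b then 1 / of_nat n else 0) = Mf n (Ynet n) U a b"
proof -
  have Uc: "U \<in> carrier_mat n n" using U by (rule unitary_carrier)
  have n0: "0 < n" using ab by auto
  let ?O = "outer (unit_vec n 0) (unit_vec n 0)"
  have O: "?O \<in> carrier_mat n n" by (simp add: outer_def)
  have Oe: "?O $$ (p,q) = (if p = 0 \<and> q = 0 then 1 else 0)" if "p < n" "q < n" for p q
    using that n0 by (simp add: outer_def)
  have "rho_net n U $$ (a,b) = (\<Sum>q<n. (U * ?O) $$ (a,q) * adj U $$ (q,b))"
    unfolding rho_net_def using Uc O ab by (intro mult_entry[of _ n n]) auto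
  also have "\<dots> = (\<Sum>q<n. (\<Sum>p<n. U $$ (a,p) * ?O $$ (p,q)) * cnj (U $$ (b,q)))"
    using Uc O ab by (intro sum.cong refl) (simp add: mult_entry[OF Uc O])
  also have "\<dots> = (\<Sum>q<n. (if q = 0 then U $$ (a,0) else 0) * cnj (U $$ (b,q)))"
  proof (intro sum.cong refl)
    fix q assume q: "q \<in> {..<n}"
    have "(\<Sum>p<n. U $$ (a,p) * ?O $$ (p,q)) = (\<Sum>p<n. U $$ (a,p) * (if q = 0 then (if p = 0 then 1 else 0) else 0))"
      using q by (intro sum.cong refl) (auto simp: Oe)
    also have "\<dots> = (if q = 0 then U $$ (a,0) else 0)"
      using n0 by (cases "q = 0") (simp_all add: sum_delta_right)
    finally show "(\<Sum>p<n. U $$ (a,p) * ?O $$ (p,q)) * cnj (U $$ (b,q)) = (if q = 0 then U $$ (a,0) else 0) * cnj (U $$ (b,q))"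
      by simp
  qed
  also have "\<dots> = U $$ (a,0) * cnj (U $$ (b,0))"
    by (rule sum_delta_left[OF n0])
  finally have r: "rho_net n U $$ (a,b) = U $$ (a,0) * cnj (U $$ (b,0))" .
  have "Mf n (Ynet n) U a b = (\<Sum>p<n. \<Sum>q<n. U $$ (a,p) * (if p = 0 \<and> q = 0 then 1 else 0) * cnj (U $$ (b,q)))
      - (\<Sum>p<n. \<Sum>q<n. U $$ (a,p) * (if p = q then 1 / of_nat n else 0) * cnj (U $$ (b,q)))"
    unfolding Mf_def Ynet_def by (simp add: algebra_simps sum_subtractf)
  also have "(\<Sum>p<n. \<Sum>q<n. U $$ (a,p) * (if p = 0 \<and> q = 0 then 1 else 0) * cnj (U $$ (b,q))) =
      U $$ (a,0) * cnj (U $$ (b,0))"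
  proof -
    have inner: "(\<Sum>q<n. U $$ (a,p) * (if p = 0 \<and> q = 0 then 1 else 0) * cnj (U $$ (b,q))) =
       (if p = 0 then U $$ (a,0) * cnj (U $$ (b,0)) else 0)" for p
    proof (cases "p = 0")
      case True
      have "(\<Sum>q<n. U $$ (a,p) * (if p = 0 \<and> q = 0 then 1 else 0) * cnj (U $$ (b,q))) =
            (\<Sum>q<n. (if q = 0 then 1 else 0) * (U $$ (a,0) * cnj (U $$ (b,q))))"
        using True by (intro sum.cong refl) auto
      also have "\<dots> = U $$ (a,0) * cnj (U $$ (b,0))" using sum_delta_left[OF n0] by simp
      finally show ?thesis using True by simp
    qed simp
    have "(\<Sum>p<n. \<Sum>q<n. U $$ (a,p) * (if p = 0 \<and> q = 0 then 1 else 0) * cnj (U $$ (b,q))) =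
          (\<Sum>p<n. if p = 0 then U $$ (a,0) * cnj (U $$ (b,0)) else 0)"
      by (simp only: inner)
    also have "\<dots> = U $$ (a,0) * cnj (U $$ (b,0))" using n0 by (simp add: sum.delta)
    finally show ?thesis .
  qed
  also have "(\<Sum>p<n. \<Sum>q<n. U $$ (a,p) * (if p = q then 1 / of_nat n else 0) * cnj (U $$ (b,q))) =
      (1 / of_nat n) * (\<Sum>p<n. U $$ (a,p) * cnj (U $$ (b,p)))"
  proof -
    have "(\<Sum>p<n. \<Sum>q<n. U $$ (a,p) * (if p = q then 1 / of_nat n else 0) * cnj (U $$ (b,q))) =
          (\<Sum>p<n. \<Sum>q<n. if q = p then (1 / of_nat n) * (U $$ (a,p) * cnj (U $$ (b,q))) else 0)"
      by (intro sum.cong refl) auto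
    also have "\<dots> = (\<Sum>p<n. (1 / of_nat n) * (U $$ (a,p) * cnj (U $$ (b,p))))"
      by (intro sum.cong refl) (simp add: sum.delta)
    finally show ?thesis by (simp add: sum_distrib_left)
  qed
  also have "(\<Sum>p<n. U $$ (a,p) * cnj (U $$ (b,p))) = (if a = b then 1 else 0)"
    by (rule unitary_entries_row[OF U ab])
  finally show ?thesis using r by simp
qed

lemma net_dev:
  assumes O: "Obj \<in> carrier_mat Dv Dv" and U: "unitary_mat (Dv*Dh) U"
  shows "deviation Obj Dh (rho_net (Dv*Dh) U) = Qf (Dv*Dh) (\<lambda>b a. kron Obj (1\<^sub>m Dh) $$ (b,a)) (Ynet (Dv*Dh)) U"
  unfolding dev_sum[OF O] Qf_def
  by (intro sum.cong refl) (simp add: net_entry[OF U])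

lemma Ynet_tr: "0 < n \<Longrightarrow> (\<Sum>p<n. Ynet n p p) = 0"
  unfolding Ynet_def by (simp add: sum_subtractf sum.delta)

lemma Ynet_fro: "(\<Sum>p<n. \<Sum>q<n. (cmod (Ynet n p q))\<^sup>2) \<le> 4"
proof -
  have b: "(cmod (Ynet n p q))\<^sup>2 \<le> 2 * (if p = 0 \<and> q = 0 then 1 else 0) + 2 * (if p = q then 1 / (real n)\<^sup>2 else 0)" for p q
  proof -
    have "cmod (Ynet n p q) \<le> cmod (if p = 0 \<and> q = 0 then 1 else 0 :: complex) + cmod (if p = q then 1 / of_nat n else 0 :: complex)"
      unfolding Ynet_def by (rule norm_triangle_ineq4)
    then have "(cmod (Ynet n p q))\<^sup>2 \<le> (cmod (if p = 0 \<and> q = 0 then 1 else 0 :: complex) + cmod (if p = q then 1 / of_nat n else 0 :: complex))\<^sup>2"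
      by (intro power_mono) auto
    also have "\<dots> \<le> 2 * (cmod (if p = 0 \<and> q = 0 then 1 else 0 :: complex))\<^sup>2 + 2 * (cmod (if p = q then 1 / of_nat n else 0 :: complex))\<^sup>2"
      by (smt (verit) sum_squares_bound zero_le_power2 power2_sum)
    also have "\<dots> = 2 * (if p = 0 \<and> q = 0 then 1 else 0) + 2 * (if p = q then 1 / (real n)\<^sup>2 else 0)"
      by (auto simp: norm_divide power_divide)
    finally show ?thesis .
  qed
  have "(\<Sum>p<n. \<Sum>q<n. (cmod (Ynet n p q))\<^sup>2) \<le>
        (\<Sum>p<n. \<Sum>q<n. 2 * (if p = 0 \<and> q = 0 then 1 else 0) + 2 * (if p = q then 1 / (real n)\<^sup>2 else 0))"
    using b by (intro sum_mono) auto
  also have "\<dots> \<le> 4"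
  proof (cases "n = 0")
    case True then show ?thesis by simp
  next
    case False
    have e1: "(\<Sum>p<n. \<Sum>q<n. (if p = 0 \<and> q = 0 then 1 else 0 :: real)) = 1"
    proof -
      have "(\<Sum>p<n. \<Sum>q<n. (if p = 0 \<and> q = 0 then 1 else 0 :: real)) = (\<Sum>p<n. if p = 0 then (\<Sum>q<n. if q = 0 then 1 else 0) else 0)"
        by (intro sum.cong refl) auto
      then show ?thesis using False by (simp add: sum.delta)
    qed
    have e2: "(\<Sum>p<n. \<Sum>q<n. (if p = q then 1 / (real n)\<^sup>2 else 0)) = real n * (1 / (real n)\<^sup>2)"
    proof -
      have "(\<Sum>p<n. \<Sum>q<n. (if p = q then 1 / (real n)\<^sup>2 else 0)) = (\<Sum>p<n. 1 / (real n)\<^sup>2)"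
        by (intro sum.cong refl) (simp add: sum.delta)
      then show ?thesis by simp
    qed
    have le: "real n * (1 / (real n)\<^sup>2) \<le> 1" using False by (simp add: power2_eq_square)
    have "(\<Sum>p<n. \<Sum>q<n. 2 * (if p = 0 \<and> q = 0 then 1 else 0) + 2 * (if p = q then 1 / (real n)\<^sup>2 else 0))
       = 2 * (\<Sum>p<n. \<Sum>q<n. (if p = 0 \<and> q = 0 then 1 else 0 :: real)) + 2 * (\<Sum>p<n. \<Sum>q<n. (if p = q then 1 / (real n)\<^sup>2 else 0))"
      by (simp only: sum.distrib sum_distrib_left[symmetric])
    also have "\<dots> = 2 * 1 + 2 * (real n * (1 / (real n)\<^sup>2))" by (simp only: e1 e2)
    finally show ?thesis using le by linarith
  qed
  finally show ?thesis .
qed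


declare index_mult_mat(1)[simp del]

definition Dg :: "nat \<Rightarrow> (nat \<Rightarrow> complex) \<Rightarrow> complex mat" where
  "Dg n g = mat n n (\<lambda>(i,j). if i = j then g i else 0)"

lemma Dg_carrier[simp]: "Dg n g \<in> carrier_mat n n" by (simp add: Dg_def)
lemma Dg_dims[simp]: "dim_row (Dg n g) = n" "dim_col (Dg n g) = n" by (auto simp: Dg_def)
lemma Dg_index[simp]: "i < n \<Longrightarrow> j < n \<Longrightarrow> Dg n g $$ (i,j) = (if i = j then g i else 0)"
  by (simp add: Dg_def)

lemma conj_diag_entry:
  assumes U: "U \<in> carrier_mat n n" and ab: "a < n" "b < n"
  shows "(adj U * Dg n g * U) $$ (a,b) = (\<Sum>l<n. cnj (U $$ (l,a)) * g l * U $$ (l,b))"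
proof -
  have AD: "adj U * Dg n g \<in> carrier_mat n n" using U by (meson adj_carrier Dg_carrier mult_carrier_mat)
  have "(adj U * Dg n g * U) $$ (a,b) = (\<Sum>l<n. (adj U * Dg n g) $$ (a,l) * U $$ (l,b))"
    using AD U ab by (intro mult_entry) auto
  also have "\<dots> = (\<Sum>l<n. (\<Sum>m<n. cnj (U $$ (m,a)) * (if m = l then g m else 0)) * U $$ (l,b))"
    using U ab by (intro sum.cong refl) (auto simp: mult_entry[OF adj_carrier[OF U] Dg_carrier] intro!: sum.cong)
  also have "\<dots> = (\<Sum>l<n. cnj (U $$ (l,a)) * g l * U $$ (l,b))"
  proof (intro sum.cong refl)
    fix l assume l: "l \<in> {..<n}"
    have "(\<Sum>m<n. cnj (U $$ (m,a)) * (if m = l then g m else 0)) = (\<Sum>m<n. (if m = l then g l else 0) * cnj (U $$ (m,a)))"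
      by (intro sum.cong refl) auto
    also have "\<dots> = g l * cnj (U $$ (l,a))" using l by (simp add: sum_delta_left)
    finally show "(\<Sum>m<n. cnj (U $$ (m,a)) * (if m = l then g m else 0)) * U $$ (l,b) = cnj (U $$ (l,a)) * g l * U $$ (l,b)"
      by (simp add: mult.commute)
  qed
  finally show ?thesis .
qed

lemma Dg_mult: "Dg n g * Dg n h = Dg n (\<lambda>l. g l * h l)"
proof (rule eq_matI)
  fix i j assume ij: "i < dim_row (Dg n (\<lambda>l. g l * h l))" "j < dim_col (Dg n (\<lambda>l. g l * h l))"
  then have i: "i < n" and j: "j < n" by (auto simp: Dg_def)
  have "(Dg n g * Dg n h) $$ (i,j) = (\<Sum>k<n. Dg n g $$ (i,k) * Dg n h $$ (k,j))"
    using i j by (intro mult_entry) auto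
  also have "\<dots> = (\<Sum>k<n. (if k = i then g i else 0) * (if k = j then h k else 0))"
    using i j by (intro sum.cong refl) auto
  also have "\<dots> = g i * (if i = j then h i else 0)" using i by (simp add: sum_delta_left)
  finally show "(Dg n g * Dg n h) $$ (i,j) = Dg n (\<lambda>l. g l * h l) $$ (i,j)" using i j by simp
qed (auto simp: Dg_def)

lemma Dg_pow: "Dg n g ^\<^sub>m k = Dg n (\<lambda>l. g l ^ k)"
proof (induction k)
  case 0
  show ?case by (rule eq_matI) (auto simp: Dg_def)
next
  case (Suc k)
  then show ?case by (simp add: Dg_mult mult.commute)
qed

lemma conj_pow:
  assumes U: "unitary_mat n U" and D: "D \<in> carrier_mat n n"
  shows "(adj U * D * U) ^\<^sub>m k = adj U * (D ^\<^sub>m k) * U"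
proof (induction k)
  case 0
  have Uc: "U \<in> carrier_mat n n" using U by (rule unitary_carrier)
  have "adj U * D * U \<in> carrier_mat n n" using Uc D by (meson adj_carrier mult_carrier_mat)
  then have "(adj U * D * U) ^\<^sub>m 0 = 1\<^sub>m n" using Uc by (simp add: carrier_matD)
  also have "\<dots> = adj U * (D ^\<^sub>m 0) * U" using D Uc unitary_left[OF U]
    by (simp add: right_mult_one_mat[OF adj_carrier[OF Uc]])
  finally show ?case .
next
  case (Suc k)
  have Uc: "U \<in> carrier_mat n n" using U by (rule unitary_carrier)
  have UU: "U * adj U = 1\<^sub>m n"
    using mat_mult_left_right_inverse[OF adj_carrier[OF Uc] Uc unitary_left[OF U]] .
  have Dk: "D ^\<^sub>m k \<in> carrier_mat n n" using D by simp
  have "(adj U * D * U) ^\<^sub>m Suc k = (adj U * (D ^\<^sub>m k) * U) * (adj U * D * U)" using Suc by simp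
  also have "\<dots> = adj U * (D ^\<^sub>m k) * (U * adj U) * D * U"
    using Uc D Dk by (simp add: assoc_n[where n=n] cl_n[where n=n] adjc_n[where n=n])
  also have "\<dots> = adj U * (D ^\<^sub>m Suc k) * U"
    using Uc D Dk UU by (simp add: assoc_n[where n=n] cl_n[where n=n] adjc_n[where n=n] right_mult_one_mat[OF Dk])
  finally show ?case .
qed

lemma mat_exp_conj_entry:
  assumes U: "unitary_mat n U" and ab: "a < n" "b < n"
  shows "mat_exp (adj U * Dg n d * U) $$ (a,b) = (\<Sum>l<n. cnj (U $$ (l,a)) * exp (d l) * U $$ (l,b))"
proof -
  have Uc: "U \<in> carrier_mat n n" using U by (rule unitary_carrier)
  let ?A = "adj U * Dg n d * U"
  have A: "?A \<in> carrier_mat n n" using Uc by (meson adj_carrier Dg_carrier mult_carrier_mat)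
  have pk: "(?A ^\<^sub>m k) $$ (a,b) = (\<Sum>l<n. cnj (U $$ (l,a)) * d l ^ k * U $$ (l,b))" for k
    using conj_pow[OF U Dg_carrier, of d k] conj_diag_entry[OF Uc ab] by (simp add: Dg_pow)
  have s: "(\<lambda>k. (\<Sum>l<n. cnj (U $$ (l,a)) * (d l ^ k /\<^sub>R fact k) * U $$ (l,b))) sums
           (\<Sum>l<n. cnj (U $$ (l,a)) * exp (d l) * U $$ (l,b))"
    by (intro sums_sum sums_mult sums_mult2 exp_converges)
  have "mat_exp ?A $$ (a,b) = (\<Sum>k. (?A ^\<^sub>m k) $$ (a,b) / of_nat (fact k))"
    unfolding mat_exp_def using A ab Uc by (simp add: carrier_matD)
  also have "\<dots> = (\<Sum>k. (\<Sum>l<n. cnj (U $$ (l,a)) * (d l ^ k /\<^sub>R fact k) * U $$ (l,b)))"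
  proof -
    have "(?A ^\<^sub>m k) $$ (a,b) / of_nat (fact k) = (\<Sum>l<n. cnj (U $$ (l,a)) * (d l ^ k /\<^sub>R fact k) * U $$ (l,b))" for k
      unfolding pk by (simp add: sum_divide_distrib scaleR_conv_of_real divide_inverse mult_ac sum_distrib_left)
    then show ?thesis by simp
  qed
  also have "\<dots> = (\<Sum>l<n. cnj (U $$ (l,a)) * exp (d l) * U $$ (l,b))"
    using s by (rule sums_unique[symmetric])
  finally show ?thesis .
qed


declare index_mult_mat(1)[simp del]

definition Ev :: "complex mat \<Rightarrow> nat \<Rightarrow> real" where
  "Ev S l = exp (- Re (S $$ (l,l)))"

definition sig :: "nat \<Rightarrow> complex mat \<Rightarrow> nat \<Rightarrow> real" where
  "sig n S l = Ev S l / (\<Sum>m<n. Ev S m)"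

lemma Ev_pos: "0 < Ev S l" by (simp add: Ev_def)

lemma boltz_entry:
  assumes U: "unitary_mat n U" and S: "S \<in> carrier_mat n n" "diagonal_mat S"
    and Sr: "\<forall>i<n. S $$ (i,i) \<in> \<real>" and ab: "a < n" "b < n"
  shows "rho_boltz S U $$ (a,b) = (\<Sum>l<n. cnj (U $$ (l,a)) * of_real (sig n S l) * U $$ (l,b))"
proof -
  have Uc: "U \<in> carrier_mat n n" using U by (rule unitary_carrier)
  let ?d = "\<lambda>l. - (S $$ (l,l))"
  have ed: "exp (?d l) = of_real (Ev S l)" if "l < n" for l
  proof -
    have "S $$ (l,l) = of_real (Re (S $$ (l,l)))" using Sr that by (metis Reals_cases Re_complex_of_real)
    then have "?d l = of_real (- Re (S $$ (l,l)))" by (metis of_real_minus)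
    then have "exp (?d l) = exp (of_real (- Re (S $$ (l,l))))" by (simp only:)
    also have "\<dots> = of_real (exp (- Re (S $$ (l,l))))" by (rule exp_of_real)
    finally show ?thesis unfolding Ev_def .
  qed
  have H: "- (adj U * S * U) = adj U * Dg n ?d * U"
  proof (rule eq_matI)
    fix i j assume ij: "i < dim_row (adj U * Dg n ?d * U)" "j < dim_col (adj U * Dg n ?d * U)"
    then have i: "i < n" and j: "j < n" using Uc by auto
    have SD: "S = Dg n (\<lambda>l. S $$ (l,l))"
      using S by (intro eq_matI) (auto simp: diagonal_mat_def)
    have "(- (adj U * S * U)) $$ (i,j) = - ((adj U * S * U) $$ (i,j))"
      using i j Uc S by simp
    also have "\<dots> = - (\<Sum>l<n. cnj (U $$ (l,i)) * S $$ (l,l) * U $$ (l,j))"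
      using conj_diag_entry[OF Uc i j, of "\<lambda>l. S $$ (l,l)"] SD by simp
    also have "\<dots> = (\<Sum>l<n. cnj (U $$ (l,i)) * ?d l * U $$ (l,j))"
      by (simp add: sum_negf[symmetric])
    also have "\<dots> = (adj U * Dg n ?d * U) $$ (i,j)" using conj_diag_entry[OF Uc i j] by simp
    finally show "(- (adj U * S * U)) $$ (i,j) = (adj U * Dg n ?d * U) $$ (i,j)" .
  qed (use Uc S in auto)
  have me: "mat_exp (- (adj U * S * U)) $$ (p,q) = (\<Sum>l<n. cnj (U $$ (l,p)) * of_real (Ev S l) * U $$ (l,q))"
    if "p < n" "q < n" for p q
    unfolding H using mat_exp_conj_entry[OF U that, of ?d] ed by simp
  have dimM: "dim_row (mat_exp (- (adj U * S * U))) = n" "dim_col (mat_exp (- (adj U * S * U))) = n"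
    using Uc S by (auto simp: mat_exp_def)
  have tr: "mtrace (mat_exp (- (adj U * S * U))) = of_real (\<Sum>l<n. Ev S l)"
  proof -
    have "mtrace (mat_exp (- (adj U * S * U))) = (\<Sum>p<n. \<Sum>l<n. cnj (U $$ (l,p)) * of_real (Ev S l) * U $$ (l,p))"
      unfolding mtrace_def dimM by (intro sum.cong refl) (simp add: me)
    also have "\<dots> = (\<Sum>l<n. of_real (Ev S l) * (\<Sum>p<n. U $$ (l,p) * cnj (U $$ (l,p))))"
      by (subst sum.swap) (simp add: sum_distrib_left mult_ac)
    also have "\<dots> = (\<Sum>l<n. of_real (Ev S l))"
      by (intro sum.cong refl) (simp add: unitary_entries_row[OF U])
    finally show ?thesis by simp
  qed
  have "rho_boltz S U $$ (a,b) = (1 / of_real (\<Sum>l<n. Ev S l)) * mat_exp (- (adj U * S * U)) $$ (a,b)"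
    unfolding rho_boltz_def Let_def tr using dimM ab by simp
  also have "\<dots> = (\<Sum>l<n. cnj (U $$ (l,a)) * of_real (sig n S l) * U $$ (l,b))"
    unfolding me[OF ab] sig_def by (simp add: sum_distrib_left mult_ac)
  finally show ?thesis .
qed


declare index_mult_mat(1)[simp del]

definition Xb :: "nat \<Rightarrow> complex mat \<Rightarrow> nat \<Rightarrow> nat \<Rightarrow> complex" where
  "Xb n S b a = (if b = a then of_real (sig n S a) else 0)"

definition Yb :: "nat \<Rightarrow> (nat \<Rightarrow> nat \<Rightarrow> complex) \<Rightarrow> nat \<Rightarrow> nat \<Rightarrow> complex" where
  "Yb n K p q = K p q - (if p = q then (\<Sum>i<n. K i i) / of_nat n else 0)"

lemma sig_sum: "0 < n \<Longrightarrow> (\<Sum>l<n. sig n S l) = 1"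
proof -
  assume n: "0 < n"
  have "0 < (\<Sum>m<n. Ev S m)" using n Ev_pos by (intro sum_pos) auto
  then show ?thesis unfolding sig_def by (simp add: sum_divide_distrib[symmetric])
qed

lemma sig_nonneg: "0 \<le> sig n S l"
  unfolding sig_def using Ev_pos by (intro divide_nonneg_nonneg sum_nonneg) (auto intro: less_imp_le)

lemma Xb_fro: "0 < n \<Longrightarrow> (\<Sum>a<n. \<Sum>b<n. (cmod (Xb n S b a))\<^sup>2) \<le> 1"
proof -
  assume n: "0 < n"
  have "(\<Sum>a<n. \<Sum>b<n. (cmod (Xb n S b a))\<^sup>2) = (\<Sum>a<n. (sig n S a)\<^sup>2)"
  proof (intro sum.cong refl)
    fix a assume a: "a \<in> {..<n}"
    have "(\<Sum>b<n. (cmod (Xb n S b a))\<^sup>2) = (\<Sum>b<n. if b = a then (sig n S a)\<^sup>2 else 0)"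
      by (intro sum.cong refl) (auto simp: Xb_def abs_of_nonneg sig_nonneg)
    then show "(\<Sum>b<n. (cmod (Xb n S b a))\<^sup>2) = (sig n S a)\<^sup>2" using a by (simp add: sum.delta)
  qed
  also have "\<dots> \<le> (\<Sum>a<n. sig n S a * (\<Sum>l<n. sig n S l))"
  proof (intro sum_mono)
    fix a assume "a \<in> {..<n}"
    then have "sig n S a \<le> (\<Sum>l<n. sig n S l)" by (intro member_le_sum sig_nonneg) auto
    then show "(sig n S a)\<^sup>2 \<le> sig n S a * (\<Sum>l<n. sig n S l)"
      by (simp add: power2_eq_square mult_left_mono sig_nonneg)
  qed
  also have "\<dots> = 1" using sig_sum[OF n] by simp
  finally show ?thesis .
qed

lemma Yb_tr: "0 < n \<Longrightarrow> (\<Sum>p<n. Yb n K p p) = 0"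
  unfolding Yb_def by (simp add: sum_subtractf)

lemma var_id:
  fixes x :: "nat \<Rightarrow> complex"
  assumes n: "0 < n"
  shows "(\<Sum>p<n. (cmod (x p - (\<Sum>i<n. x i) / of_nat n))\<^sup>2) \<le> (\<Sum>p<n. (cmod (x p))\<^sup>2)"
proof -
  define c where "c = (\<Sum>i<n. x i) / of_nat n"
  have sx: "(\<Sum>i<n. x i) = of_nat n * c" using n by (simp add: c_def)
  have scx: "(\<Sum>i<n. cnj (x i)) = of_nat n * cnj c" using sx by (metis cnj_sum complex_cnj_mult complex_cnj_of_nat)
  have "complex_of_real (\<Sum>p<n. (cmod (x p - c))\<^sup>2) = (\<Sum>p<n. (x p - c) * cnj (x p - c))"
    by (simp only: of_real_sum complex_norm_square)
  also have "\<dots> = (\<Sum>p<n. x p * cnj (x p)) - cnj c * (\<Sum>i<n. x i) - c * (\<Sum>i<n. cnj (x i)) + of_nat n * (c * cnj c)"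
    by (simp add: algebra_simps sum.distrib sum_subtractf sum_distrib_left)
  also have "\<dots> = (\<Sum>p<n. x p * cnj (x p)) - of_nat n * (c * cnj c)"
    unfolding sx scx by (simp add: algebra_simps)
  also have "\<dots> = complex_of_real ((\<Sum>p<n. (cmod (x p))\<^sup>2) - real n * (cmod c)\<^sup>2)"
    by (simp only: of_real_diff of_real_sum of_real_mult complex_norm_square of_real_of_nat_eq)
  finally have "(\<Sum>p<n. (cmod (x p - c))\<^sup>2) = (\<Sum>p<n. (cmod (x p))\<^sup>2) - real n * (cmod c)\<^sup>2"
    using of_real_eq_iff by blast
  then show ?thesis unfolding c_def[symmetric] by simp
qed

lemma sum_change_one:
  fixes g h :: "nat \<Rightarrow> real"
  assumes "p < n" "\<And>q. q < n \<Longrightarrow> q \<noteq> p \<Longrightarrow> g q = h q"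
  shows "(\<Sum>q<n. g q) = (\<Sum>q<n. h q) + (g p - h p)"
proof -
  have "(\<Sum>q<n. g q) = g p + (\<Sum>q\<in>{..<n} - {p}. g q)" using assms(1) by (simp add: sum.remove)
  moreover have "(\<Sum>q<n. h q) = h p + (\<Sum>q\<in>{..<n} - {p}. h q)" using assms(1) by (simp add: sum.remove)
  moreover have "(\<Sum>q\<in>{..<n} - {p}. g q) = (\<Sum>q\<in>{..<n} - {p}. h q)" using assms(2) by (intro sum.cong) auto
  ultimately show ?thesis by simp
qed

lemma Yb_fro:
  assumes n: "0 < n"
  shows "(\<Sum>p<n. \<Sum>q<n. (cmod (Yb n K p q))\<^sup>2) \<le> (\<Sum>p<n. \<Sum>q<n. (cmod (K p q))\<^sup>2)"
proof -
  let ?c = "(\<Sum>i<n. K i i) / of_nat n"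
  have "(\<Sum>p<n. \<Sum>q<n. (cmod (Yb n K p q))\<^sup>2) =
        (\<Sum>p<n. (\<Sum>q<n. (cmod (K p q))\<^sup>2) + ((cmod (K p p - ?c))\<^sup>2 - (cmod (K p p))\<^sup>2))"
  proof (intro sum.cong refl)
    fix p assume "p \<in> {..<n}"
    then have p: "p < n" by simp
    show "(\<Sum>q<n. (cmod (Yb n K p q))\<^sup>2) = (\<Sum>q<n. (cmod (K p q))\<^sup>2) + ((cmod (K p p - ?c))\<^sup>2 - (cmod (K p p))\<^sup>2)"
      by (subst sum_change_one[OF p, where h = "\<lambda>q. (cmod (K p q))\<^sup>2"]) (auto simp: Yb_def)
  qed
  also have "\<dots> = (\<Sum>p<n. \<Sum>q<n. (cmod (K p q))\<^sup>2) + ((\<Sum>p<n. (cmod (K p p - ?c))\<^sup>2) - (\<Sum>p<n. (cmod (K p p))\<^sup>2))"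
    by (simp add: sum.distrib sum_subtractf)
  also have "\<dots> \<le> (\<Sum>p<n. \<Sum>q<n. (cmod (K p q))\<^sup>2)"
    using var_id[OF n, of "\<lambda>p. K p p"] by simp
  finally show ?thesis .
qed

lemma boltz_alg:
  fixes K :: "nat \<Rightarrow> nat \<Rightarrow> complex" and \<sigma> :: "nat \<Rightarrow> complex"
  assumes U: "unitary_mat n U" and s1: "(\<Sum>l<n. \<sigma> l) = 1"
  shows "(\<Sum>a<n. \<Sum>b<n. K b a * ((\<Sum>l<n. cnj (U $$ (l,a)) * \<sigma> l * U $$ (l,b)) - (if a = b then 1 / of_nat n else 0)))
       = (\<Sum>a<n. \<Sum>b<n. (if b = a then \<sigma> a else 0) * Mf n (\<lambda>p q. K p q - (if p = q then (\<Sum>i<n. K i i) / of_nat n else 0)) U a b)"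
proof -
  let ?c = "(\<Sum>i<n. K i i) / of_nat n"
  let ?G = "\<lambda>l. (\<Sum>p<n. \<Sum>q<n. U $$ (l,p) * K p q * cnj (U $$ (l,q)))"
  let ?Y = "\<lambda>p q. K p q - (if p = q then ?c else 0)"
  have L1: "(\<Sum>a<n. \<Sum>b<n. K b a * ((\<Sum>l<n. cnj (U $$ (l,a)) * \<sigma> l * U $$ (l,b)) - (if a = b then 1 / of_nat n else 0)))
      = (\<Sum>a<n. \<Sum>b<n. K b a * (\<Sum>l<n. cnj (U $$ (l,a)) * \<sigma> l * U $$ (l,b))) - ?c"
  proof -
    have "(\<Sum>a<n. \<Sum>b<n. K b a * (if a = b then 1 / of_nat n else 0)) = (\<Sum>a<n. K a a * (1 / of_nat n))"
    proof (intro sum.cong refl)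
      fix a assume a: "a \<in> {..<n}"
      have "(\<Sum>b<n. K b a * (if a = b then 1 / of_nat n else 0)) = (\<Sum>b<n. K b a * (if b = a then 1 / of_nat n else 0))"
        by (intro sum.cong) auto
      also have "\<dots> = K a a * (1 / of_nat n)" using a by (simp only: sum_delta_right lessThan_iff)
      finally show "(\<Sum>b<n. K b a * (if a = b then 1 / of_nat n else 0)) = K a a * (1 / of_nat n)" .
    qed
    also have "\<dots> = ?c" by (simp add: sum_divide_distrib)
    finally show ?thesis by (simp add: right_diff_distrib sum_subtractf)
  qed
  have L2: "(\<Sum>a<n. \<Sum>b<n. K b a * (\<Sum>l<n. cnj (U $$ (l,a)) * \<sigma> l * U $$ (l,b))) = (\<Sum>l<n. \<sigma> l * ?G l)"
  proof -
    have "(\<Sum>a<n. \<Sum>b<n. K b a * (\<Sum>l<n. cnj (U $$ (l,a)) * \<sigma> l * U $$ (l,b))) =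
          (\<Sum>a<n. \<Sum>b<n. \<Sum>l<n. \<sigma> l * (U $$ (l,b) * K b a * cnj (U $$ (l,a))))"
      by (simp add: sum_distrib_left mult_ac)
    also have "\<dots> = (\<Sum>a<n. \<Sum>l<n. \<Sum>b<n. \<sigma> l * (U $$ (l,b) * K b a * cnj (U $$ (l,a))))"
      by (intro sum.cong refl sum.swap)
    also have "\<dots> = (\<Sum>l<n. \<Sum>a<n. \<Sum>b<n. \<sigma> l * (U $$ (l,b) * K b a * cnj (U $$ (l,a))))"
      by (rule sum.swap)
    also have "\<dots> = (\<Sum>l<n. \<Sum>b<n. \<Sum>a<n. \<sigma> l * (U $$ (l,b) * K b a * cnj (U $$ (l,a))))"
      by (intro sum.cong refl sum.swap)
    also have "\<dots> = (\<Sum>l<n. \<sigma> l * ?G l)"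
      by (simp add: sum_distrib_left)
    finally show ?thesis .
  qed
  have M: "Mf n ?Y U a a = ?G a - ?c" if a: "a < n" for a
  proof -
    have "Mf n ?Y U a a = ?G a - (\<Sum>p<n. \<Sum>q<n. U $$ (a,p) * (if p = q then ?c else 0) * cnj (U $$ (a,q)))"
      unfolding Mf_def by (simp add: algebra_simps sum_subtractf)
    also have "(\<Sum>p<n. \<Sum>q<n. U $$ (a,p) * (if p = q then ?c else 0) * cnj (U $$ (a,q))) =
        (\<Sum>p<n. ?c * (U $$ (a,p) * cnj (U $$ (a,p))))"
    proof (intro sum.cong refl)
      fix p assume p: "p \<in> {..<n}"
      have "(\<Sum>q<n. U $$ (a,p) * (if p = q then ?c else 0) * cnj (U $$ (a,q))) =
            (\<Sum>q<n. (if q = p then ?c else 0) * (U $$ (a,p) * cnj (U $$ (a,q))))"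
        by (intro sum.cong refl) auto
      also have "\<dots> = ?c * (U $$ (a,p) * cnj (U $$ (a,p)))" using p by (simp add: sum_delta_left)
      finally show "(\<Sum>q<n. U $$ (a,p) * (if p = q then ?c else 0) * cnj (U $$ (a,q))) = ?c * (U $$ (a,p) * cnj (U $$ (a,p)))" .
    qed
    also have "\<dots> = ?c * (\<Sum>p<n. U $$ (a,p) * cnj (U $$ (a,p)))" by (simp only: sum_distrib_left)
    also have "\<dots> = ?c" using unitary_entries_row[OF U a a] by simp
    finally show ?thesis .
  qed
  have R: "(\<Sum>a<n. \<Sum>b<n. (if b = a then \<sigma> a else 0) * Mf n ?Y U a b) = (\<Sum>a<n. \<sigma> a * (?G a - ?c))"
  proof (intro sum.cong refl)
    fix a assume a: "a \<in> {..<n}"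
    have "(\<Sum>b<n. (if b = a then \<sigma> a else 0) * Mf n ?Y U a b) = \<sigma> a * Mf n ?Y U a a"
      using a by (simp add: sum_delta_left)
    then show "(\<Sum>b<n. (if b = a then \<sigma> a else 0) * Mf n ?Y U a b) = \<sigma> a * (?G a - ?c)" using M a by simp
  qed
  have "(\<Sum>a<n. \<sigma> a * (?G a - ?c)) = (\<Sum>l<n. \<sigma> l * ?G l) - (\<Sum>a<n. \<sigma> a) * ?c"
    by (simp only: right_diff_distrib sum_subtractf sum_distrib_right)
  also have "\<dots> = (\<Sum>l<n. \<sigma> l * ?G l) - ?c" using s1 by simp
  finally have "(\<Sum>a<n. \<sigma> a * (?G a - ?c)) = (\<Sum>l<n. \<sigma> l * ?G l) - ?c" .
  then show ?thesis using L1 L2 R by simp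
qed


declare index_mult_mat(1)[simp del]

definition Kf :: "complex mat \<Rightarrow> nat \<Rightarrow> nat \<Rightarrow> nat \<Rightarrow> complex" where
  "Kf Obj Dh b a = kron Obj (1\<^sub>m Dh) $$ (b,a)"

lemma boltz_dev:
  assumes O: "Obj \<in> carrier_mat Dv Dv" and U: "unitary_mat (Dv*Dh) U"
    and S: "S \<in> carrier_mat (Dv*Dh) (Dv*Dh)" "diagonal_mat S" and Sr: "\<forall>i<Dv*Dh. S $$ (i,i) \<in> \<real>"
    and n: "0 < Dv*Dh"
  shows "deviation Obj Dh (rho_boltz S U) = Qf (Dv*Dh) (Xb (Dv*Dh) S) (Yb (Dv*Dh) (Kf Obj Dh)) U"
proof -
  let ?n = "Dv*Dh"
  have s1: "(\<Sum>l<?n. complex_of_real (sig ?n S l)) = 1"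
    using sig_sum[OF n, of S] by (metis of_real_1 of_real_sum)
  have "deviation Obj Dh (rho_boltz S U) = (\<Sum>a<?n. \<Sum>b<?n. Kf Obj Dh b a *
            ((\<Sum>l<?n. cnj (U $$ (l,a)) * of_real (sig ?n S l) * U $$ (l,b)) - (if a = b then 1 / of_nat ?n else 0)))"
    unfolding dev_sum[OF O] Kf_def
    by (intro sum.cong refl) (simp add: boltz_entry[OF U S Sr])
  also have "\<dots> = (\<Sum>a<?n. \<Sum>b<?n. (if b = a then of_real (sig ?n S a) else 0) *
      Mf ?n (\<lambda>p q. Kf Obj Dh p q - (if p = q then (\<Sum>i<?n. Kf Obj Dh i i) / of_nat ?n else 0)) U a b)"
    by (rule boltz_alg[OF U s1])
  also have "\<dots> = Qf ?n (Xb ?n S) (Yb ?n (Kf Obj Dh)) U"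
    unfolding Qf_def Xb_def Yb_def by simp
  finally show ?thesis .
qed

lemma net_dev':
  assumes O: "Obj \<in> carrier_mat Dv Dv" and U: "unitary_mat (Dv*Dh) U"
  shows "deviation Obj Dh (rho_net (Dv*Dh) U) = Qf (Dv*Dh) (Kf Obj Dh) (Ynet (Dv*Dh)) U"
  using net_dev[OF O U] unfolding Kf_def by simp

lemma markov_dev:
  fixes \<mu> :: "complex mat measure" and devf Q :: "complex mat \<Rightarrow> complex"
  assumes P: "prob_space \<mu>" and ae: "AE U in \<mu>. devf U = Q U"
    and int: "integrable \<mu> (\<lambda>U. Q U * cnj (Q U))" and t: "0 < t"
    and bd: "Re (\<integral>U. Q U * cnj (Q U) \<partial>\<mu>) \<le> Bd"
  shows "measure \<mu> {U \<in> space \<mu>. cmod (devf U) > t} \<le> Bd / t\<^sup>2"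
proof -
  interpret prob_space \<mu> by (rule P)
  let ?g = "\<lambda>U. Re (Q U * cnj (Q U))"
  have gi: "integrable \<mu> ?g" by (rule integrable_Re[OF int])
  have gm[measurable]: "?g \<in> borel_measurable \<mu>" using gi by (rule borel_measurable_integrable)
  have gq: "?g U = (cmod (Q U))\<^sup>2" for U
    by (simp add: complex_mult_cnj power2_eq_square cmod_def)
  have B: "{U \<in> space \<mu>. t\<^sup>2 \<le> ?g U} \<in> sets \<mu>" by measurable
  have "measure \<mu> {U \<in> space \<mu>. cmod (devf U) > t} \<le> measure \<mu> {U \<in> space \<mu>. t\<^sup>2 \<le> ?g U}"
  proof (rule finite_measure_mono_AE[OF _ B])
    show "AE U in \<mu>. U \<in> {U \<in> space \<mu>. t < cmod (devf U)} \<longrightarrow> U \<in> {U \<in> space \<mu>. t\<^sup>2 \<le> ?g U}"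
      using ae
    proof eventually_elim
      case (elim U)
      show ?case
      proof
        assume "U \<in> {U \<in> space \<mu>. t < cmod (devf U)}"
        then have "t < cmod (Q U)" "U \<in> space \<mu>" using elim by auto
        then have "t\<^sup>2 \<le> (cmod (Q U))\<^sup>2" using t by (intro power_mono) auto
        then show "U \<in> {U \<in> space \<mu>. t\<^sup>2 \<le> ?g U}" using \<open>U \<in> space \<mu>\<close> gq by simp
      qed
    qed
  qed
  also have "\<dots> \<le> (\<integral>U. ?g U \<partial>\<mu>) / t\<^sup>2"
    using t by (intro integral_Markov_inequality_measure[OF gi B]) (auto simp: gq)
  also have "(\<integral>U. ?g U \<partial>\<mu>) = Re (\<integral>U. Q U * cnj (Q U) \<partial>\<mu>)" by (rule integral_Re[OF int])
  also have "\<dots> / t\<^sup>2 \<le> Bd / t\<^sup>2" using bd t by (intro divide_right_mono) auto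
  finally show ?thesis .
qed

lemma EH_bound:
  fixes X Y :: "nat \<Rightarrow> nat \<Rightarrow> complex"
  assumes haar: "haar_unitary n H" and n2: "2 \<le> n" and tr: "(\<Sum>p<n. Y p p) = 0"
  shows "Re (\<integral>U. Qf n X Y U * cnj (Qf n X Y U) \<partial>H) \<le>
     2 / (real n)\<^sup>2 * ((\<Sum>p<n. \<Sum>q<n. (cmod (Y p q))\<^sup>2) * (\<Sum>a<n. \<Sum>b<n. (cmod (X b a))\<^sup>2))"
proof -
  let ?F = "\<Sum>p<n. \<Sum>q<n. (cmod (Y p q))\<^sup>2"
  let ?SX = "\<Sum>a<n. \<Sum>b<n. (cmod (X b a))\<^sup>2"
  have F0: "0 \<le> ?F" by (intro sum_nonneg) auto
  have X0: "0 \<le> ?SX" by (intro sum_nonneg) auto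
  have nr: "(2::real) \<le> real n" using n2 by simp
  have n21: "0 < real n ^ 2 - 1"
  proof -
    have "4 \<le> real n * real n" using mult_mono[OF nr nr] by simp
    then show ?thesis by (simp add: power2_eq_square)
  qed
  have "Re (\<integral>U. Qf n X Y U * cnj (Qf n X Y U) \<partial>H) =
     ?F / (real n ^ 2 - 1) * ?SX - ?F / (real n * (real n ^ 2 - 1)) * (cmod (\<Sum>a<n. X a a))\<^sup>2"
    unfolding Qf_def using H_bound[where H=H and n=n and Y=Y, OF haar n2 tr, of X] by simp
  also have "\<dots> \<le> ?F / (real n ^ 2 - 1) * ?SX"
    using F0 n21 nr by (simp add: divide_nonneg_nonneg)
  also have "\<dots> = (1 / (real n ^ 2 - 1)) * (?F * ?SX)" by simp
  also have "\<dots> \<le> (2 / (real n)\<^sup>2) * (?F * ?SX)"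
  proof (rule mult_right_mono)
    have "(real n)\<^sup>2 * 1 \<le> 2 * (real n ^ 2 - 1)"
    proof -
      have h1: "4 \<le> real n * real n" using mult_mono[OF nr nr] by simp
      then show ?thesis unfolding power2_eq_square by (simp only: mult_1_right right_diff_distrib)
    qed
    moreover have "0 < (real n)\<^sup>2" using nr by simp
    ultimately show "1 / (real n ^ 2 - 1) \<le> 2 / (real n)\<^sup>2" using n21 by (simp add: divide_simps)
    show "0 \<le> ?F * ?SX" using F0 X0 by simp
  qed
  finally show ?thesis .
qed


lemma Qf_n1:
  assumes "(\<Sum>p<1. Y p p) = (0::complex)"
  shows "Qf 1 X Y U = 0"
  using assms unfolding Qf_def Mf_def by simp

lemma sum2_zero:
  fixes Y :: "nat \<Rightarrow> nat \<Rightarrow> complex"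
  assumes "(\<Sum>p<n. \<Sum>q<n. (cmod (Y p q))\<^sup>2) = 0" "p < n" "q < n"
  shows "Y p q = 0"
proof -
  have "\<forall>p\<in>{..<n}. (\<Sum>q<n. (cmod (Y p q))\<^sup>2) = 0"
    using assms(1) sum_nonneg_eq_0_iff[of "{..<n}" "\<lambda>p. \<Sum>q<n. (cmod (Y p q))\<^sup>2"]
    by (simp add: sum_nonneg)
  then have "(\<Sum>q<n. (cmod (Y p q))\<^sup>2) = 0" using assms(2) by simp
  then have "\<forall>q\<in>{..<n}. (cmod (Y p q))\<^sup>2 = 0"
    using sum_nonneg_eq_0_iff[of "{..<n}" "\<lambda>q. (cmod (Y p q))\<^sup>2"] by simp
  then show ?thesis using assms(3) by simp
qed

lemma Qf_zero:
  assumes "(\<Sum>p<n. \<Sum>q<n. (cmod (Y p q))\<^sup>2) * (\<Sum>a<n. \<Sum>b<n. (cmod (X b a))\<^sup>2) = 0"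
  shows "Qf n X Y U = 0"
proof -
  have h: "(\<Sum>p<n. \<Sum>q<n. (cmod (Y p q))\<^sup>2) = 0 \<or> (\<Sum>a<n. \<Sum>b<n. (cmod (X b a))\<^sup>2) = 0"
    using assms by simp
  then show ?thesis
  proof
    assume "(\<Sum>p<n. \<Sum>q<n. (cmod (Y p q))\<^sup>2) = 0"
    then have "\<forall>p<n. \<forall>q<n. Y p q = 0" using sum2_zero by blast
    then show ?thesis unfolding Qf_def Mf_def by simp
  next
    assume "(\<Sum>a<n. \<Sum>b<n. (cmod (X b a))\<^sup>2) = 0"
    then have "\<forall>a<n. \<forall>b<n. X b a = 0"
      using sum2_zero[of "\<lambda>a b. X b a" n] by blast
    then show ?thesis unfolding Qf_def by simp
  qed
qed

lemma generic:
  fixes X Y :: "nat \<Rightarrow> nat \<Rightarrow> complex" and devf :: "complex mat \<Rightarrow> complex"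
  assumes \<delta>: "0 < \<delta>" and Dv: "0 < Dv" and Dh: "0 < Dh"
    and des: "unitary_2_design (Dv*Dh) \<mu>"
    and ae: "\<And>U. unitary_mat (Dv*Dh) U \<Longrightarrow> devf U = Qf (Dv*Dh) X Y U"
    and tr: "(\<Sum>p<Dv*Dh. Y p p) = 0"
    and FX: "(\<Sum>p<Dv*Dh. \<Sum>q<Dv*Dh. (cmod (Y p q))\<^sup>2) * (\<Sum>a<Dv*Dh. \<Sum>b<Dv*Dh. (cmod (X b a))\<^sup>2) \<le> 4 * real (Dv*Dh) * opn\<^sup>2"
    and opn: "0 \<le> opn"
  shows "measure \<mu> {U \<in> space \<mu>. cmod (devf U) > sqrt (8 / \<delta>) * opn * sqrt (real Dv / real Dh)} \<le> \<delta>"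
proof -
  let ?n = "Dv*Dh"
  let ?Q = "\<lambda>U. Qf ?n X Y U"
  let ?t = "sqrt (8 / \<delta>) * opn * sqrt (real Dv / real Dh)"
  have n0: "0 < ?n" using Dv Dh by simp
  have P: "prob_space \<mu>" and AEu: "AE U in \<mu>. unitary_mat ?n U"
    using des unfolding unitary_2_design_def by auto
  obtain H where haar: "haar_unitary ?n H" and
    mom: "\<forall>ks ls. length ks \<le> 2 \<and> length ls \<le> 2 \<and> set ks \<union> set ls \<subseteq> {..<?n} \<times> {..<?n} \<longrightarrow>
           integrable \<mu> (monomial ks ls) \<and> (\<integral>U. monomial ks ls U \<partial>\<mu>) = (\<integral>U. monomial ks ls U \<partial>H)"
    using des unfolding unitary_2_design_def by blast
  have PP: "PP \<mu> H (\<lambda>U. ?Q U * cnj (?Q U))" by (rule PP_Q[OF haar mom])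
  then have int: "integrable \<mu> (\<lambda>U. ?Q U * cnj (?Q U))"
    and eq: "(\<integral>U. ?Q U * cnj (?Q U) \<partial>\<mu>) = (\<integral>U. ?Q U * cnj (?Q U) \<partial>H)"
    unfolding PP_def[OF haar mom] by auto
  have aeQ: "AE U in \<mu>. devf U = ?Q U" using AEu by eventually_elim (rule ae)
  show ?thesis
  proof (cases "opn = 0")
    case True
    then have "(\<Sum>p<?n. \<Sum>q<?n. (cmod (Y p q))\<^sup>2) * (\<Sum>a<?n. \<Sum>b<?n. (cmod (X b a))\<^sup>2) = 0"
    proof -
      have "0 \<le> (\<Sum>p<?n. \<Sum>q<?n. (cmod (Y p q))\<^sup>2) * (\<Sum>a<?n. \<Sum>b<?n. (cmod (X b a))\<^sup>2)"
        by (intro mult_nonneg_nonneg sum_nonneg) auto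
      then show ?thesis using FX True by simp
    qed
    then have Q0: "?Q U = 0" for U by (rule Qf_zero)
    interpret prob_space \<mu> by (rule P)
    have "measure \<mu> {U \<in> space \<mu>. cmod (devf U) > ?t} \<le> measure \<mu> {}"
    proof (rule finite_measure_mono_AE)
      show "AE U in \<mu>. U \<in> {U \<in> space \<mu>. cmod (devf U) > ?t} \<longrightarrow> U \<in> {}"
        using aeQ by eventually_elim (use True Q0 in simp)
    qed simp
    then show ?thesis using \<delta> by simp
  next
    case False
    then have opp: "0 < opn" using opn by simp
    have tpos: "0 < ?t" using opp \<delta> Dv Dh by simp
    let ?Bd = "8 * opn\<^sup>2 / real ?n"
    have bd: "Re (\<integral>U. ?Q U * cnj (?Q U) \<partial>\<mu>) \<le> ?Bd"
    proof (cases "?n = 1")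
      case True
      then have "?Q U = 0" for U using tr Qf_n1[of Y X U] by simp
      then show ?thesis using opp by simp
    next
      case False
      then have n2: "2 \<le> ?n" using n0 by linarith
      have "Re (\<integral>U. ?Q U * cnj (?Q U) \<partial>\<mu>) = Re (\<integral>U. ?Q U * cnj (?Q U) \<partial>H)" using eq by simp
      also have "\<dots> \<le> 2 / (real ?n)\<^sup>2 * ((\<Sum>p<?n. \<Sum>q<?n. (cmod (Y p q))\<^sup>2) * (\<Sum>a<?n. \<Sum>b<?n. (cmod (X b a))\<^sup>2))"
        by (rule EH_bound[where Y=Y and n="Dv*Dh" and H=H, OF haar n2 tr])
      also have "\<dots> \<le> 2 / (real ?n)\<^sup>2 * (4 * real ?n * opn\<^sup>2)"
        by (rule mult_left_mono[OF FX]) simp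
      also have "\<dots> = ?Bd" using n0 by (simp add: power2_eq_square field_simps)
      finally show ?thesis .
    qed
    have "measure \<mu> {U \<in> space \<mu>. cmod (devf U) > ?t} \<le> ?Bd / ?t\<^sup>2"
      by (rule markov_dev[OF P aeQ int tpos bd])
    also have "?Bd / ?t\<^sup>2 = \<delta> / (real Dv)\<^sup>2"
    proof -
      have "?t\<^sup>2 = (8 / \<delta>) * opn\<^sup>2 * (real Dv / real Dh)"
        using \<delta> Dv Dh by (simp add: power_mult_distrib real_sqrt_pow2)
      then show ?thesis using \<delta> Dv Dh opp by (simp add: field_simps power2_eq_square)
    qed
    also have "\<dots> \<le> \<delta>"
    proof -
      have "1 \<le> (real Dv)\<^sup>2" using Dv by (simp add: one_le_power)
      then show ?thesis using \<delta> by (simp add: divide_le_eq)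
    qed
    finally show ?thesis .
  qed
qed


lemma opnorm_nonneg:
  fixes A :: "complex mat"
  assumes A: "A \<in> carrier_mat m m" and m: "0 < m"
  shows "0 \<le> opnorm A"
proof -
  have ej: "vnorm (unit_vec m 0) = 1"
  proof -
    have "(\<Sum>i<m. (cmod (unit_vec m 0 $ i))\<^sup>2) = (\<Sum>i<m. if i = 0 then 1 else 0)"
      using m by (intro sum.cong) auto
    then show ?thesis unfolding vnorm_def using m by simp
  qed
  have "vnorm (A *\<^sub>v unit_vec m 0) \<le> opnorm A"
    unfolding opnorm_def using A ej by (intro cSup_upper opnorm_bdd) auto
  moreover have "0 \<le> vnorm (A *\<^sub>v unit_vec m 0)" unfolding vnorm_def by (intro real_sqrt_ge_zero sum_nonneg) auto
  ultimately show ?thesis by linarith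
qed

theorem proposition2:
  shows "\<forall>\<delta>::real. \<delta> > 0 \<longrightarrow> (\<exists>C::real. \<forall>(Dv::nat) (Dh::nat) (Obj::complex mat) (S::complex mat) \<mu>.
     0 < Dv \<and> 0 < Dh \<and> Obj \<in> carrier_mat Dv Dv \<and>
     S \<in> carrier_mat (Dv * Dh) (Dv * Dh) \<and> diagonal_mat S \<and>
     (\<forall>i < Dv * Dh. S $$ (i,i) \<in> \<real>) \<and>
     unitary_2_design (Dv * Dh) \<mu>
     \<longrightarrow>
     measure \<mu> {U \<in> space \<mu>. cmod (deviation Obj Dh (rho_net (Dv * Dh) U))
                    > C * opnorm Obj * sqrt (real Dv / real Dh)} \<le> \<delta> \<and>
     measure \<mu> {U \<in> space \<mu>. cmod (deviation Obj Dh (rho_boltz S U))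
                    > C * opnorm Obj * sqrt (real Dv / real Dh)} \<le> \<delta>)"
proof (intro allI impI)
  fix \<delta> :: real assume \<delta>: "\<delta> > 0"
  show "\<exists>C::real. \<forall>(Dv::nat) (Dh::nat) (Obj::complex mat) (S::complex mat) \<mu>.
     0 < Dv \<and> 0 < Dh \<and> Obj \<in> carrier_mat Dv Dv \<and>
     S \<in> carrier_mat (Dv * Dh) (Dv * Dh) \<and> diagonal_mat S \<and>
     (\<forall>i < Dv * Dh. S $$ (i,i) \<in> \<real>) \<and>
     unitary_2_design (Dv * Dh) \<mu>
     \<longrightarrow>
     measure \<mu> {U \<in> space \<mu>. cmod (deviation Obj Dh (rho_net (Dv * Dh) U))
                    > C * opnorm Obj * sqrt (real Dv / real Dh)} \<le> \<delta> \<and>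
     measure \<mu> {U \<in> space \<mu>. cmod (deviation Obj Dh (rho_boltz S U))
                    > C * opnorm Obj * sqrt (real Dv / real Dh)} \<le> \<delta>"
  proof (rule exI[of _ "sqrt (8 / \<delta>)"], intro allI impI, elim conjE)
    fix Dv Dh :: nat and Obj S :: "complex mat" and \<mu> :: "complex mat measure"
    assume Dv: "0 < Dv" and Dh: "0 < Dh" and O: "Obj \<in> carrier_mat Dv Dv"
      and Sc: "S \<in> carrier_mat (Dv * Dh) (Dv * Dh)" and Sd: "diagonal_mat S"
      and Sr: "\<forall>i < Dv * Dh. S $$ (i,i) \<in> \<real>" and des: "unitary_2_design (Dv * Dh) \<mu>"
    let ?n = "Dv * Dh"
    have n0: "0 < ?n" using Dv Dh by simp
    have opn: "0 \<le> opnorm Obj" by (rule opnorm_nonneg[OF O Dv])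
    have KF: "(\<Sum>a<?n. \<Sum>b<?n. (cmod (Kf Obj Dh b a))\<^sup>2) \<le> real ?n * (opnorm Obj)\<^sup>2"
      unfolding Kf_def by (rule kron_fro[OF O Dh])
    have K0: "0 \<le> (\<Sum>a<?n. \<Sum>b<?n. (cmod (Kf Obj Dh b a))\<^sup>2)" by (intro sum_nonneg) auto
    have ae1: "deviation Obj Dh (rho_net ?n U) = Qf ?n (Kf Obj Dh) (Ynet ?n) U" if "unitary_mat ?n U" for U
      by (rule net_dev'[OF O that])
    have FX1: "(\<Sum>p<?n. \<Sum>q<?n. (cmod (Ynet ?n p q))\<^sup>2) * (\<Sum>a<?n. \<Sum>b<?n. (cmod (Kf Obj Dh b a))\<^sup>2)
            \<le> 4 * real ?n * (opnorm Obj)\<^sup>2"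
    proof -
      have "(\<Sum>p<?n. \<Sum>q<?n. (cmod (Ynet ?n p q))\<^sup>2) * (\<Sum>a<?n. \<Sum>b<?n. (cmod (Kf Obj Dh b a))\<^sup>2)
            \<le> 4 * (real ?n * (opnorm Obj)\<^sup>2)"
        by (rule mult_mono[OF Ynet_fro KF]) (use K0 in auto)
      then show ?thesis by (simp add: mult.assoc)
    qed
    have net: "measure \<mu> {U \<in> space \<mu>. cmod (deviation Obj Dh (rho_net ?n U))
                    > sqrt (8 / \<delta>) * opnorm Obj * sqrt (real Dv / real Dh)} \<le> \<delta>"
      by (rule generic[OF \<delta> Dv Dh des ae1 Ynet_tr[OF n0] FX1 opn])
    have ae2: "deviation Obj Dh (rho_boltz S U) = Qf ?n (Xb ?n S) (Yb ?n (Kf Obj Dh)) U" if "unitary_mat ?n U" for U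
      by (rule boltz_dev[OF O that Sc Sd Sr n0])
    have F: "(\<Sum>p<?n. \<Sum>q<?n. (cmod (Yb ?n (Kf Obj Dh) p q))\<^sup>2) \<le> real ?n * (opnorm Obj)\<^sup>2"
    proof -
      have "(\<Sum>p<?n. \<Sum>q<?n. (cmod (Yb ?n (Kf Obj Dh) p q))\<^sup>2) \<le> (\<Sum>p<?n. \<Sum>q<?n. (cmod (Kf Obj Dh p q))\<^sup>2)"
        by (rule Yb_fro[OF n0])
      also have "\<dots> = (\<Sum>a<?n. \<Sum>b<?n. (cmod (Kf Obj Dh b a))\<^sup>2)" by (rule sum.swap)
      finally show ?thesis using KF by linarith
    qed
    have FX2: "(\<Sum>p<?n. \<Sum>q<?n. (cmod (Yb ?n (Kf Obj Dh) p q))\<^sup>2) * (\<Sum>a<?n. \<Sum>b<?n. (cmod (Xb ?n S b a))\<^sup>2)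
            \<le> 4 * real ?n * (opnorm Obj)\<^sup>2"
    proof -
      have "(\<Sum>p<?n. \<Sum>q<?n. (cmod (Yb ?n (Kf Obj Dh) p q))\<^sup>2) * (\<Sum>a<?n. \<Sum>b<?n. (cmod (Xb ?n S b a))\<^sup>2)
            \<le> (real ?n * (opnorm Obj)\<^sup>2) * 1"
      proof (rule mult_mono[OF F Xb_fro[OF n0]])
        show "0 \<le> real ?n * (opnorm Obj)\<^sup>2" by simp
        show "0 \<le> (\<Sum>a<?n. \<Sum>b<?n. (cmod (Xb ?n S b a))\<^sup>2)" by (intro sum_nonneg) auto
      qed
      also have "\<dots> \<le> 4 * real ?n * (opnorm Obj)\<^sup>2" by simp
      finally show ?thesis .
    qed
    have boltz: "measure \<mu> {U \<in> space \<mu>. cmod (deviation Obj Dh (rho_boltz S U))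
                    > sqrt (8 / \<delta>) * opnorm Obj * sqrt (real Dv / real Dh)} \<le> \<delta>"
      by (rule generic[OF \<delta> Dv Dh des ae2 Yb_tr[OF n0] FX2 opn])
    show "measure \<mu> {U \<in> space \<mu>. cmod (deviation Obj Dh (rho_net (Dv * Dh) U))
                    > sqrt (8 / \<delta>) * opnorm Obj * sqrt (real Dv / real Dh)} \<le> \<delta> \<and>
     measure \<mu> {U \<in> space \<mu>. cmod (deviation Obj Dh (rho_boltz S U))
                    > sqrt (8 / \<delta>) * opnorm Obj * sqrt (real Dv / real Dh)} \<le> \<delta>"
      using net boltz by simp
  qed
qed


end
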